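(* There exist universal constants $0<c\le C$ such that for every integer $d\ge 1$ and every integer $k\ge 2$ there exist a set $\mathcal{X}$ and a concept class $\mathcal{H}\subseteq\mathcal{Y}^{\mathcal{X}}$ with $\mathcal{Y}=\{0,1,\dots,k\}$ such that (1) $\mathsf{opt}_{\operatorname{full}}^{\operatorname{det}}(\mathcal{H})=d+1$; (2) $c\,dk\le \mathsf{opt}_{\operatorname{bandit}}^{\operatorname{det}}(\mathcal{H})\le C\,dk$; (3) $c(d+k)\le \mathsf{opt}_{\operatorname{bandit}}^{\operatorname{adap}}(\mathcal{H})\le C(d+k)$.
   Context: A concept class is a nonempty $\mathcal{H}\subseteq\mathcal{Y}^{\mathcal{X}}$; its induced pattern class $\mathcal{P}(\mathcal{H})$ is the set of finite sequences of examples $(x,y)\in\mathcal{X}\times\mathcal{Y}$ consistent with some $h\in\mathcal{H}$ (i.e. $h(x)=y$ for all examples), and $\mathsf{opt}(\mathcal{H}):=\mathsf{opt}(\mathcal{P}(\mathcal{H}))$ for each notion below. Online learning: in rounds $t=1,2,\dots$ the adversary presents $x_t$, the learner outputs a prediction $\hat y_t$ (a draw from a distribution depending on past observations and $x_t$; deterministic learners use point masses), and a mistake occurs if $\hat y_t\neq y_t$ for the true label $y_t$. Full-information feedback reveals $y_t$; bandit feedback reveals only whether $\hat y_t=y_t$. $\mathsf{opt}_{\operatorname{full}}^{\operatorname{det}}(\mathcal{P})$ (resp. $\mathsf{opt}_{\operatorname{bandit}}^{\operatorname{det}}(\mathcal{P})$) is the infimum over deterministic learners of the supremum over sequences $S\in\mathcal{P}$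 of the number of mistakes with full-information (resp. bandit) feedback. A bandit history is realizable by $\mathcal{P}$ if some assignment of true labels, agreeing with all the correct/incorrect observations, makes the labeled sequence an element of $\mathcal{P}$. An adaptive adversary in each round chooses $x_t$ from the history, sees the learner's distribution $\pi^{(t)}$, and chooses a distribution $\tau^{(t)}$ for $y_t$; $\hat y_t\sim\pi^{(t)}$, $y_t\sim\tau^{(t)}$; it must keep the history realizable for every $y_t$ in the support of $\tau^{(t)}$. $\mathsf{opt}_{\operatorname{bandit}}^{\operatorname{adap}}(\mathcal{P})=\inf_{\text{learner}}\sup_{\text{adversary}}$ expected mistakes with bandit feedback. *)

theory Defs
  imports "HOL-Probability.Probability_Mass_Function"
begin

(* Instances are encoded with domain X :: nat set and labels in nat;
   a concept class is a set H of functions nat => nat (only values on X matter),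
   with labels in Y = {0..k}. *)

definition patterns :: "nat set \<Rightarrow> (nat \<Rightarrow> nat) set \<Rightarrow> (nat \<times> nat) list set" where
  "patterns X H = {S. \<exists>h\<in>H. \<forall>(x,y)\<in>set S. x \<in> X \<and> h x = y}"

fun full_mistakes ::
  "((nat \<times> nat) list \<Rightarrow> nat \<Rightarrow> nat) \<Rightarrow> (nat \<times> nat) list \<Rightarrow> (nat \<times> nat) list \<Rightarrow> nat" where
  "full_mistakes L h [] = 0"
| "full_mistakes L h ((x,y) # S) =
     (if L h x = y then 0 else 1) + full_mistakes L (h @ [(x,y)]) S"

definition opt_full_det :: "nat set \<Rightarrow> (nat \<Rightarrow> nat) set \<Rightarrow> ennreal" where
  "opt_full_det X H = (INF L. SUP S\<in>patterns X H. of_nat (full_mistakes L [] S))"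

(* bandit observations: (x_t, prediction, whether prediction was correct) *)
fun bandit_mistakes ::
  "((nat \<times> nat \<times> bool) list \<Rightarrow> nat \<Rightarrow> nat) \<Rightarrow> (nat \<times> nat \<times> bool) list \<Rightarrow> (nat \<times> nat) list \<Rightarrow> nat" where
  "bandit_mistakes L h [] = 0"
| "bandit_mistakes L h ((x,y) # S) =
     (let p = L h x in (if p = y then 0 else 1) + bandit_mistakes L (h @ [(x, p, p = y)]) S)"

definition opt_bandit_det :: "nat set \<Rightarrow> (nat \<Rightarrow> nat) set \<Rightarrow> ennreal" where
  "opt_bandit_det X H = (INF L. SUP S\<in>patterns X H. of_nat (bandit_mistakes L [] S))"

definition bandit_realizable :: "nat set \<Rightarrow> (nat \<Rightarrow> nat) set \<Rightarrow> (nat \<times> nat \<times> bool) list \<Rightarrow> bool" where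
  "bandit_realizable X H obs =
     (\<exists>ys. length ys = length obs \<and>
        (\<forall>i<length obs. (fst (snd (obs ! i)) = ys ! i) = snd (snd (obs ! i))) \<and>
        zip (map fst obs) ys \<in> patterns X H)"

(* full history (x_t, prediction, true label) and the learner's bandit view of it *)
definition obs_of :: "(nat \<times> nat \<times> nat) list \<Rightarrow> (nat \<times> nat \<times> bool) list" where
  "obs_of h = map (\<lambda>(x,p,y). (x, p, p = y)) h"

(* T rounds of the randomized bandit game against an adaptive adversary (ax, ay);
   returns the distribution of the number of mistakes *)
fun play ::
  "((nat \<times> nat \<times> bool) list \<Rightarrow> nat \<Rightarrow> nat pmf) \<Rightarrow> ((nat \<times> nat \<times> nat) list \<Rightarrow> nat) \<Rightarrow>
   ((nat \<times> nat \<times> nat) list \<Rightarrow> nat pmf \<Rightarrow> nat pmf) \<Rightarrow> nat \<Rightarrow> (nat \<times> nat \<times> nat) list \<Rightarrow> nat pmf" where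
  "play L ax ay 0 h = return_pmf 0"
| "play L ax ay (Suc n) h =
     (let x = ax h; \<pi> = L (obs_of h) x; \<tau> = ay h \<pi> in
      bind_pmf \<pi> (\<lambda>p. bind_pmf \<tau> (\<lambda>y.
        map_pmf (\<lambda>m. (if p = y then 0 else 1) + m) (play L ax ay n (h @ [(x, p, y)])))))"

definition valid_adversary ::
  "nat set \<Rightarrow> (nat \<Rightarrow> nat) set \<Rightarrow> nat \<Rightarrow> ((nat \<times> nat \<times> bool) list \<Rightarrow> nat \<Rightarrow> nat pmf) \<Rightarrow>
   ((nat \<times> nat \<times> nat) list \<Rightarrow> nat) \<Rightarrow> ((nat \<times> nat \<times> nat) list \<Rightarrow> nat pmf \<Rightarrow> nat pmf) \<Rightarrow> bool" where
  "valid_adversary X H k L ax ay =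
     (\<forall>h. bandit_realizable X H (obs_of h) \<longrightarrow>
        (let x = ax h; \<pi> = L (obs_of h) x; \<tau> = ay h \<pi> in
          set_pmf \<tau> \<subseteq> {0..k} \<and>
          (\<forall>p\<in>set_pmf \<pi>. \<forall>y\<in>set_pmf \<tau>. bandit_realizable X H (obs_of h @ [(x, p, p = y)]))))"

definition opt_bandit_adap :: "nat set \<Rightarrow> (nat \<Rightarrow> nat) set \<Rightarrow> nat \<Rightarrow> ennreal" where
  "opt_bandit_adap X H k =
     (INF L. SUP A\<in>{(ax, ay). valid_adversary X H k L ax ay}.
        SUP T. \<integral>\<^sup>+ m. of_nat m \<partial>measure_pmf (play L (fst A) (snd A) T []))"

end

theory Submission
  imports Defs
begin

definition HH :: "nat \<Rightarrow> nat \<Rightarrow> (nat \<Rightarrow> nat) set" where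
 "HH d k = {f. \<exists>s. 1 \<le> s \<and> s \<le> k \<and> (\<forall>x. f x = 0 \<or> f x = s) \<and> finite {x. f x = 0} \<and> card {x. f x = 0} \<le> d}"

definition cons :: "(nat \<Rightarrow> nat) \<Rightarrow> (nat \<times> nat \<times> bool) list \<Rightarrow> bool" where
 "cons f obs = (\<forall>(x,p,b)\<in>set obs. (p = f x) = b)"

lemma real_iff: "bandit_realizable UNIV H obs \<longleftrightarrow> (\<exists>f\<in>H. cons f obs)"
proof
  assume "bandit_realizable UNIV H obs"
  then obtain ys where l: "length ys = length obs" and e: "\<forall>i<length obs. (fst (snd (obs ! i)) = ys ! i) = snd (snd (obs ! i))"
    and z: "zip (map fst obs) ys \<in> patterns UNIV H" unfolding bandit_realizable_def by blast
  from z obtain f where f: "f \<in> H" "\<forall>(x,y)\<in>set (zip (map fst obs) ys). f x = y" unfolding patterns_def by fastforce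
  have "cons f obs" unfolding cons_def
  proof (clarify)
    fix x p b assume "(x,p,b) \<in> set obs"
    then obtain i where i: "i < length obs" "obs ! i = (x,p,b)" by (metis in_set_conv_nth)
    then have "(x, ys ! i) \<in> set (zip (map fst obs) ys)" using l unfolding set_zip by (auto intro!: exI[of _ i])
    then have "f x = ys ! i" using f by auto
    then show "(p = f x) = b" using e i by auto
  qed
  then show "\<exists>f\<in>H. cons f obs" using f by blast
next
  assume "\<exists>f\<in>H. cons f obs"
  then obtain f where f: "f \<in> H" "cons f obs" by blast
  let ?ys = "map (\<lambda>e. f (fst e)) obs"
  have zz: "zip (map fst obs) ?ys = map (\<lambda>e. (fst e, f (fst e))) obs" by (induction obs) auto
  have "zip (map fst obs) ?ys \<in> patterns UNIV H" unfolding patterns_def zz using f(1) by auto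
  moreover have "\<forall>i<length obs. (fst (snd (obs ! i)) = ?ys ! i) = snd (snd (obs ! i))"
  proof (intro allI impI)
    fix i assume i: "i < length obs"
    obtain x p b where e: "obs ! i = (x,p,b)" by (cases "obs ! i") auto
    have "(x,p,b) \<in> set obs" using e i nth_mem by metis
    then have "(p = f x) = b" using f(2) unfolding cons_def by auto
    then show "(fst (snd (obs ! i)) = ?ys ! i) = snd (snd (obs ! i))" using e i by simp
  qed
  ultimately show "bandit_realizable UNIV H obs" unfolding bandit_realizable_def by (intro exI[of _ ?ys]) auto
qed

lemma HH_E:
  assumes "f \<in> HH d k"
  obtains s where "1 \<le> s" "s \<le> k" "\<And>x. f x = 0 \<or> f x = s" "finite {x. f x = 0}" "card {x. f x = 0} \<le> d"
  using assms unfolding HH_def by blast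

lemma HH_le: "f \<in> HH d k \<Longrightarrow> f x \<le> k"
proof -
  assume "f \<in> HH d k"
  then obtain s where "s \<le> k" "\<And>x. f x = 0 \<or> f x = s" unfolding HH_def by blast
  then show ?thesis by (metis le0)
qed

lemma HH_nz: "f \<in> HH d k \<Longrightarrow> f x \<noteq> 0 \<Longrightarrow> f z \<noteq> 0 \<Longrightarrow> f x = f z"
proof -
  assume "f \<in> HH d k" "f x \<noteq> 0" "f z \<noteq> 0"
  moreover obtain s where "\<And>x. f x = 0 \<or> f x = s" using \<open>f \<in> HH d k\<close> unfolding HH_def by blast
  ultimately show ?thesis by metis
qed

definition nzs :: "(nat \<times> nat) list \<Rightarrow> bool" where
  "nzs h = (\<exists>z y. (z,y) \<in> set h \<and> y \<noteq> 0)"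

definition Lf :: "(nat \<times> nat) list \<Rightarrow> nat \<Rightarrow> nat" where
  "Lf h x = (if \<exists>y. (x,y) \<in> set h then (SOME y. (x,y) \<in> set h)
             else if nzs h then (SOME y. \<exists>z. (z,y) \<in> set h \<and> y \<noteq> 0) else 1)"

definition Qf :: "(nat \<times> nat) list \<Rightarrow> nat" where
  "Qf h = card {x. (x,0) \<in> set h} + (if nzs h then 1 else 0)"

lemma fin_zero_h: "finite {x. (x,(0::nat)) \<in> set h}"
proof -
  have "{x. (x,(0::nat)) \<in> set h} \<subseteq> fst ` set h" by force
  then show ?thesis by (rule finite_subset) simp
qed

lemma full_upper_aux:
  assumes f: "f \<in> HH d k"
  shows "(\<forall>(x,y)\<in>set h. f x = y) \<Longrightarrow> (\<forall>(x,y)\<in>set S. f x = y) \<Longrightarrow> full_mistakes Lf h S + Qf h \<le> d + 1"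
proof (induction S arbitrary: h)
  case Nil
  have "{x. (x,0) \<in> set h} \<subseteq> {x. f x = 0}" using Nil(1) by auto
  moreover obtain s where "finite {x. f x = 0}" "card {x. f x = 0} \<le> d" using f unfolding HH_def by blast
  ultimately have "card {x. (x,0) \<in> set h} \<le> d" by (meson card_mono order_trans)
  then show ?case by (simp add: Qf_def)
next
  case (Cons a S)
  obtain x y where a: "a = (x,y)" by fastforce
  have fy: "f x = y" using Cons.prems a by auto
  define h' where "h' = h @ [(x,y)]"
  have IH: "full_mistakes Lf h' S + Qf h' \<le> d + 1"
  proof (rule Cons.IH)
    show "\<forall>(x,y)\<in>set h'. f x = y" using Cons.prems(1) fy unfolding h'_def by auto
    show "\<forall>(x,y)\<in>set S. f x = y" using Cons.prems(2) by auto
  qed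
  have sub: "{x. (x,0) \<in> set h} \<subseteq> {x. (x,0) \<in> set h'}" unfolding h'_def by auto
  have monoc: "card {x. (x,0) \<in> set h} \<le> card {x. (x,0) \<in> set h'}" by (rule card_mono[OF fin_zero_h sub])
  have nzm: "nzs h \<Longrightarrow> nzs h'" unfolding nzs_def h'_def by auto
  have key: "(if Lf h x = y then 0 else 1) + Qf h \<le> Qf h'"
  proof (cases "Lf h x = y")
    case True
    then show ?thesis using monoc nzm by (auto simp: Qf_def)
  next
    case False
    have notseen: "\<not> (\<exists>y. (x,y) \<in> set h)"
    proof
      assume "\<exists>y. (x,y) \<in> set h"
      then have "(x, SOME y. (x,y) \<in> set h) \<in> set h" by (rule someI_ex)
      then have "f x = (SOME y. (x,y) \<in> set h)" using Cons.prems by auto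
      then show False using False fy \<open>\<exists>y. (x,y) \<in> set h\<close> by (simp add: Lf_def)
    qed
    have ins: "{x'. (x',0) \<in> set h'} = (if y = 0 then insert x {x'. (x',0) \<in> set h} else {x'. (x',0) \<in> set h})"
      unfolding h'_def by auto
    have xn: "x \<notin> {x'. (x',0) \<in> set h}" using notseen by auto
    show ?thesis
    proof (cases "nzs h")
      case True
      then have ex: "\<exists>y. \<exists>z. (z,y) \<in> set h \<and> y \<noteq> 0" unfolding nzs_def by blast
      obtain z where z: "(z, SOME y. \<exists>z. (z,y) \<in> set h \<and> y \<noteq> 0) \<in> set h" "(SOME y. \<exists>z. (z,y) \<in> set h \<and> y \<noteq> 0) \<noteq> 0"
        using someI_ex[OF ex] by blast
      have pz: "Lf h x = (SOME y. \<exists>z. (z,y) \<in> set h \<and> y \<noteq> 0)" using notseen True by (simp add: Lf_def)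
      have "f z = Lf h x" using z pz Cons.prems by auto
      then have "y = 0" using False fy HH_nz[OF f, of x z] z pz by auto
      then show ?thesis using False ins xn True nzm fin_zero_h[of h] by (simp add: Qf_def)
    next
      case nz: False
      have pz: "Lf h x = 1" using notseen nz by (simp add: Lf_def)
      show ?thesis
      proof (cases "y = 0")
        case True
        then show ?thesis using False ins xn nz fin_zero_h[of h] monoc by (auto simp: Qf_def split: if_splits)
      next
        case y: False
        have "nzs h'" unfolding nzs_def h'_def using y by auto
        then show ?thesis using False ins y nz by (simp add: Qf_def)
      qed
    qed
  qed
  show ?case using IH key a h'_def by simp
qed

lemma full_upper: "f \<in> HH d k \<Longrightarrow> S \<in> patterns UNIV (HH d k) \<Longrightarrow> full_mistakes Lf [] S \<le> d + 1"
proof -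
  assume "S \<in> patterns UNIV (HH d k)"
  then obtain g where "g \<in> HH d k" "\<forall>(x,y)\<in>set S. g x = y" unfolding patterns_def by fastforce
  then show ?thesis using full_upper_aux[of g d k "[]" S] by simp
qed

definition Wset :: "(nat \<times> nat \<times> bool) list \<Rightarrow> nat \<Rightarrow> nat set" where
  "Wset obs p = {x. (x,p,False) \<in> set obs}"

definition okp :: "nat \<Rightarrow> nat \<Rightarrow> (nat \<times> nat \<times> bool) list \<Rightarrow> nat \<Rightarrow> nat \<Rightarrow> bool" where
  "okp d k obs x p = (1 \<le> p \<and> p \<le> k \<and> card (Wset obs p) \<le> d \<and> (x,p,False) \<notin> set obs)"

definition Ld :: "nat \<Rightarrow> nat \<Rightarrow> (nat \<times> nat \<times> bool) list \<Rightarrow> nat \<Rightarrow> nat" where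
  "Ld d k obs x = (if \<exists>q. (x,q,True) \<in> set obs then (SOME q. (x,q,True) \<in> set obs)
     else if \<exists>p. okp d k obs x p then (LEAST p. okp d k obs x p) else 0)"

definition Pd :: "nat \<Rightarrow> nat \<Rightarrow> (nat \<times> nat \<times> bool) list \<Rightarrow> nat" where
  "Pd d k obs = (\<Sum>p\<in>{1..k}. min (card (Wset obs p)) (d+1))"

lemma fin_W: "finite (Wset obs p)"
proof -
  have "Wset obs p \<subseteq> fst ` set obs" unfolding Wset_def by force
  then show ?thesis by (rule finite_subset) simp
qed

lemma Pd_le: "Pd d k obs \<le> k * (d+1)"
proof -
  have "Pd d k obs \<le> (\<Sum>p\<in>{1..k}. d+1)" unfolding Pd_def by (intro sum_mono) simp
  then show ?thesis by simp
qed

lemma Pd_mono: "Pd d k obs \<le> Pd d k (obs @ [e])"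
  unfolding Pd_def
  by (intro sum_mono min.mono card_mono fin_W) (auto simp: Wset_def)

lemma det_upper_aux:
  assumes f: "f \<in> HH d k"
  shows "cons f obs \<Longrightarrow> (\<forall>(x,y)\<in>set S. f x = y) \<Longrightarrow> bandit_mistakes (Ld d k) obs S + Pd d k obs \<le> k * (d+1)"
proof (induction S arbitrary: obs)
  case Nil
  then show ?case using Pd_le by simp
next
  case (Cons a S)
  obtain x y where a: "a = (x,y)" by fastforce
  have fy: "f x = y" using Cons.prems a by auto
  define p where "p = Ld d k obs x"
  define obs' where "obs' = obs @ [(x,p,p=y)]"
  have c': "cons f obs'" using Cons.prems(1) fy unfolding cons_def obs'_def by auto
  have IH: "bandit_mistakes (Ld d k) obs' S + Pd d k obs' \<le> k * (d+1)"
  proof (rule Cons.IH[OF c'])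
    show "\<forall>(x,y)\<in>set S. f x = y" using Cons.prems(2) by auto
  qed
  have key: "(if p = y then 0 else 1) + Pd d k obs \<le> Pd d k obs'"
  proof (cases "p = y")
    case True then show ?thesis using Pd_mono unfolding obs'_def by simp
  next
    case False
    have nt: "\<not> (\<exists>q. (x,q,True) \<in> set obs)"
    proof
      assume ex: "\<exists>q. (x,q,True) \<in> set obs"
      then have "(x, SOME q. (x,q,True) \<in> set obs, True) \<in> set obs" by (rule someI_ex)
      then have "(SOME q. (x,q,True) \<in> set obs) = f x" using Cons.prems(1) unfolding cons_def by auto
      then show False using False fy ex by (simp add: p_def Ld_def)
    qed
    show ?thesis
    proof (cases "\<exists>p. okp d k obs x p")
      case True
      have pl: "p = (LEAST p. okp d k obs x p)" using nt True by (simp add: p_def Ld_def)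
      have okp: "okp d k obs x p" using pl True by (metis LeastI_ex)
      then have p1: "p \<in> {1..k}" "card (Wset obs p) \<le> d" "(x,p,False) \<notin> set obs" unfolding okp_def by auto
      have Wp: "Wset obs' p = insert x (Wset obs p)" using False unfolding obs'_def Wset_def by auto
      have "card (Wset obs' p) = Suc (card (Wset obs p))" using Wp p1(3) fin_W unfolding Wset_def by auto
      then have mp: "min (card (Wset obs p)) (d+1) + 1 = min (card (Wset obs' p)) (d+1)" using p1(2) by simp
      have rest: "(\<Sum>q\<in>{1..k}-{p}. min (card (Wset obs q)) (d+1)) \<le> (\<Sum>q\<in>{1..k}-{p}. min (card (Wset obs' q)) (d+1))"
        by (intro sum_mono min.mono card_mono fin_W) (auto simp: Wset_def obs'_def)
      have "Pd d k obs = min (card (Wset obs p)) (d+1) + (\<Sum>q\<in>{1..k}-{p}. min (card (Wset obs q)) (d+1))"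
        unfolding Pd_def using p1(1) by (simp add: sum.remove)
      moreover have "Pd d k obs' = min (card (Wset obs' p)) (d+1) + (\<Sum>q\<in>{1..k}-{p}. min (card (Wset obs' q)) (d+1))"
        unfolding Pd_def using p1(1) by (simp add: sum.remove)
      ultimately show ?thesis using mp rest False by simp
    next
      case nok: False
      have p0: "p = 0" using nt nok by (auto simp: p_def Ld_def)
      obtain s where s: "1 \<le> s" "s \<le> k" "\<And>x. f x = 0 \<or> f x = s" "finite {x. f x = 0}" "card {x. f x = 0} \<le> d"
        using f unfolding HH_def by blast
      have ys: "y = s" using s(3)[of x] False p0 fy by auto
      have "Wset obs s \<subseteq> {x. f x = 0}" using Cons.prems(1) s(3) unfolding cons_def Wset_def by fastforce
      then have "card (Wset obs s) \<le> d" using s(4,5) by (meson card_mono le_trans)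
      moreover have "(x,s,False) \<notin> set obs" using Cons.prems(1) fy ys unfolding cons_def by fastforce
      ultimately have "okp d k obs x s" using s unfolding okp_def by auto
      then show ?thesis using nok by blast
    qed
  qed
  have "bandit_mistakes (Ld d k) obs (a # S) = (if p = y then 0 else 1) + bandit_mistakes (Ld d k) obs' S"
    unfolding a p_def obs'_def by (simp add: Let_def)
  then show ?case using IH key by linarith
qed

lemma det_upper: "S \<in> patterns UNIV (HH d k) \<Longrightarrow> bandit_mistakes (Ld d k) [] S \<le> k * (d+1)"
proof -
  assume "S \<in> patterns UNIV (HH d k)"
  then obtain g where "g \<in> HH d k" "\<forall>(x,y)\<in>set S. g x = y" unfolding patterns_def by fastforce
  then show ?thesis using det_upper_aux[of g d k "[]" S] by (simp add: cons_def)
qed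


definition flab :: "nat \<Rightarrow> (nat \<times> nat) list \<Rightarrow> nat \<Rightarrow> nat \<Rightarrow> nat" where
  "flab d h t p = (if t < d then (if p = 0 then 1 else 0) else if p \<noteq> 1 then 1 else if nzs h then 0 else 2)"

fun fsim :: "((nat \<times> nat) list \<Rightarrow> nat \<Rightarrow> nat) \<Rightarrow> nat \<Rightarrow> nat \<Rightarrow> (nat \<times> nat) list" where
  "fsim L d 0 = []"
| "fsim L d (Suc t) = fsim L d t @ [(t, flab d (fsim L d t) t (L (fsim L d t) t))]"

lemma flab_ne: "flab d h t p \<noteq> p"
  unfolding flab_def by auto

lemma fsim_len[simp]: "length (fsim L d t) = t"
  by (induction t) auto

lemma fsim_take: "t \<le> n \<Longrightarrow> take t (fsim L d n) = fsim L d t"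
proof (induction n)
  case 0 then show ?case by simp
next
  case (Suc n)
  show ?case
  proof (cases "t = Suc n")
    case True then show ?thesis using take_all[of "fsim L d (Suc n)" t] by simp
  next
    case False then have "t \<le> n" using Suc by simp
    then show ?thesis using Suc.IH by simp
  qed
qed

lemma fsim_nth: "t < n \<Longrightarrow> fsim L d n ! t = (t, flab d (fsim L d t) t (L (fsim L d t) t))"
proof (induction n)
  case 0 then show ?case by simp
next
  case (Suc n)
  then show ?case by (cases "t = n") (auto simp: nth_append)
qed

lemma fm_all:
  assumes "length S = N" "\<forall>t<N. L (take t S) (fst (S!t)) \<noteq> snd (S!t)"
  shows "t \<le> N \<Longrightarrow> full_mistakes L (take t S) (drop t S) = N - t"
proof (induction "N - t" arbitrary: t)
  case 0 then show ?case using assms by simp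
next
  case (Suc m)
  then have t: "t < N" by simp
  have d: "drop t S = S ! t # drop (Suc t) S" using t assms(1) by (simp add: Cons_nth_drop_Suc)
  have tk: "take (Suc t) S = take t S @ [S ! t]" using t assms(1) by (simp add: take_Suc_conv_app_nth)
  obtain x y where xy: "S ! t = (x,y)" by fastforce
  have IH: "full_mistakes L (take (Suc t) S) (drop (Suc t) S) = N - Suc t" using Suc t by auto
  have "L (take t S) x \<noteq> y" using assms(2) t xy by force
  then show ?case using d tk IH xy t by simp
qed

lemma full_lower:
  assumes k: "2 \<le> k"
  shows "\<exists>S\<in>patterns UNIV (HH d k). full_mistakes L [] S = d + 1"
proof -
  define S where "S = fsim L d (Suc d)"
  define lab where "lab t = flab d (fsim L d t) t (L (fsim L d t) t)" for t
  have Snth: "S ! t = (t, lab t)" if "t \<le> d" for t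
  proof -
    have "t < Suc d" using that by simp
    then show ?thesis unfolding S_def lab_def by (rule fsim_nth)
  qed
  have Stake: "take t S = fsim L d t" if "t \<le> Suc d" for t unfolding S_def using that by (rule fsim_take)
  have lenS: "length S = Suc d" unfolding S_def by simp
  have mis: "full_mistakes L (take 0 S) (drop 0 S) = Suc d - 0"
  proof (rule fm_all[OF lenS])
    show "\<forall>t<Suc d. L (take t S) (fst (S ! t)) \<noteq> snd (S ! t)"
    proof (intro allI impI)
      fix t assume "t < Suc d"
      then show "L (take t S) (fst (S ! t)) \<noteq> snd (S ! t)"
        using Snth[of t] Stake[of t] unfolding lab_def by (simp add: flab_ne[symmetric])
    qed
  qed simp
  have setfs: "set (fsim L d n) = (\<lambda>t. (t, lab t)) ` {..<n}" for n
    unfolding lab_def by (induction n) (auto simp: lessThan_Suc)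
  have setS: "set S = (\<lambda>t. (t, lab t)) ` {..d}" unfolding S_def setfs by (simp add: lessThan_Suc_atMost)
  define s0 where "s0 = (if lab d = 2 then 2 else (1::nat))"
  define f where "f x = (if x \<le> d then lab x else s0)" for x
  have labsmall: "x < d \<Longrightarrow> lab x = 0 \<or> lab x = 1" for x unfolding lab_def flab_def by auto
  have labd: "lab d = flab d (fsim L d d) d (L (fsim L d d) d)" unfolding lab_def by simp
  have nz_iff: "nzs (fsim L d d) \<longleftrightarrow> (\<exists>z<d. lab z \<noteq> 0)" unfolding nzs_def setfs by auto
  have vals: "f x = 0 \<or> f x = s0" for x
  proof (cases "x < d")
    case True
    then have "lab x = 0 \<or> lab x = 1" by (rule labsmall)
    moreover have "lab x = 1 \<Longrightarrow> lab d \<noteq> 2" using True nz_iff labd unfolding flab_def by auto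
    ultimately show ?thesis using True unfolding f_def s0_def by auto
  next
    case False
    show ?thesis
    proof (cases "x = d")
      case True
      have "lab d = 0 \<or> lab d = 1 \<or> lab d = 2" unfolding labd flab_def by auto
      then show ?thesis using True unfolding f_def s0_def by auto
    next
      case False2: False
      then show ?thesis using False unfolding f_def s0_def by auto
    qed
  qed
  have zsub: "{x. f x = 0} \<subseteq> {..d}" using k unfolding f_def s0_def by auto
  obtain j where j: "j \<le> d" "lab j \<noteq> 0"
  proof (cases "lab d = 0")
    case True
    then have "nzs (fsim L d d)" using labd unfolding flab_def by (auto split: if_splits)
    then obtain z where "z < d" "lab z \<noteq> 0" using nz_iff by blast
    then show ?thesis by (intro that[of z]) auto
  next
    case False then show ?thesis using that by auto
  qed
  have "{x. f x = 0} \<subseteq> {..d} - {j}" using zsub j unfolding f_def by auto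
  moreover have "card ({..d} - {j}) = d" using j(1) by (simp add: card_Diff_singleton)
  ultimately have cz: "card {x. f x = 0} \<le> d" using card_mono[of "{..d} - {j}" "{x. f x = 0}"] by simp
  have fin: "finite {x. f x = 0}" using zsub by (rule finite_subset) simp
  have "f \<in> HH d k" unfolding HH_def using vals cz fin k unfolding s0_def by (intro CollectI exI[of _ s0]) (auto simp: s0_def)
  moreover have "\<forall>(x,y)\<in>set S. f x = y" unfolding setS f_def by auto
  ultimately have "S \<in> patterns UNIV (HH d k)" unfolding patterns_def by (intro CollectI bexI[of _ f]) auto
  then show ?thesis using mis by auto
qed



fun bsim :: "((nat \<times> nat \<times> bool) list \<Rightarrow> nat \<Rightarrow> nat) \<Rightarrow> nat \<Rightarrow> (nat \<times> nat \<times> bool) list" where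
  "bsim L 0 = []"
| "bsim L (Suc t) = bsim L t @ [(t, L (bsim L t) t, False)]"

lemma bm_all:
  "(\<forall>i. t \<le> i \<and> i < t + m \<longrightarrow> L (bsim L i) i \<noteq> ys i) \<Longrightarrow>
   bandit_mistakes L (bsim L t) (map (\<lambda>i. (i, ys i)) [t..<t+m]) = m"
proof (induction m arbitrary: t)
  case 0 then show ?case by simp
next
  case (Suc m)
  have u: "[t..<t + Suc m] = t # [Suc t..<Suc t + m]" by (simp add: upt_rec)
  have IH: "bandit_mistakes L (bsim L (Suc t)) (map (\<lambda>i. (i, ys i)) [Suc t..<Suc t+m]) = m"
    using Suc.prems by (intro Suc.IH) auto
  have ne: "L (bsim L t) t \<noteq> ys t" using Suc.prems by auto
  show ?case using IH ne unfolding u by (simp add: Let_def)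
qed

lemma det_lower:
  assumes k: "1 \<le> k"
  shows "\<exists>S\<in>patterns UNIV (HH d k). d * k \<le> bandit_mistakes L [] S"
proof -
  define N where "N = k * (d+1) - 1"
  define pp where "pp i = L (bsim L i) i" for i
  have "\<exists>s\<in>{1..k}. card {i. i < N \<and> pp i = s} \<le> d"
  proof (rule ccontr)
    assume "\<not> ?thesis"
    then have big: "\<forall>s\<in>{1..k}. d + 1 \<le> card {i. i < N \<and> pp i = s}" by auto
    have "k * (d+1) = (\<Sum>s\<in>{1..k}. d+1)" by simp
    also have "\<dots> \<le> (\<Sum>s\<in>{1..k}. card {i. i < N \<and> pp i = s})" using big by (intro sum_mono) auto
    also have "\<dots> = card (\<Union>s\<in>{1..k}. {i. i < N \<and> pp i = s})"
      by (rule card_UN_disjoint[symmetric]) auto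
    also have "\<dots> \<le> card {..<N}" by (intro card_mono) auto
    also have "\<dots> = N" by simp
    finally have "k * (d+1) \<le> N" .
    moreover have "0 < k * (d+1)" using k by simp
    ultimately show False unfolding N_def by linarith
  qed
  then obtain s where s: "1 \<le> s" "s \<le> k" "card {i. i < N \<and> pp i = s} \<le> d" by auto
  define f where "f x = (if x < N \<and> pp x = s then 0 else s)" for x
  define S where "S = map (\<lambda>i. (i, f i)) [0..<N]"
  have z: "{x. f x = 0} = {i. i < N \<and> pp i = s}" unfolding f_def using s by auto
  have "f \<in> HH d k" unfolding HH_def z using s by (intro CollectI exI[of _ s]) (auto simp: f_def)
  moreover have "\<forall>(x,y)\<in>set S. f x = y" unfolding S_def by auto
  ultimately have P: "S \<in> patterns UNIV (HH d k)" unfolding patterns_def by (intro CollectI bexI[of _ f]) auto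
  have "bandit_mistakes L (bsim L 0) (map (\<lambda>i. (i, f i)) [0..<0+N]) = N"
  proof (rule bm_all, intro allI impI)
    fix i assume i: "0 \<le> i \<and> i < 0 + N"
    show "L (bsim L i) i \<noteq> f i" unfolding pp_def[symmetric] f_def using s(1) i by auto
  qed
  then have "bandit_mistakes L [] S = N" unfolding S_def by simp
  moreover have "d * k \<le> N" unfolding N_def using k by (simp add: algebra_simps)
  ultimately show ?thesis using P by auto
qed


definition Rs :: "nat \<Rightarrow> nat \<Rightarrow> (nat \<times> nat \<times> bool) list \<Rightarrow> nat \<Rightarrow> nat set" where
  "Rs d k obs x = {y. y \<le> k \<and> bandit_realizable UNIV (HH d k) (obs @ [(x,y,True)])}"

definition pick :: "nat pmf \<Rightarrow> nat set \<Rightarrow> nat" where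
  "pick \<pi> A = (SOME y. y \<in> A \<and> (\<forall>z\<in>A. pmf \<pi> y \<le> pmf \<pi> z))"

lemma pick_prop:
  assumes "finite A" "A \<noteq> {}"
  shows "pick \<pi> A \<in> A \<and> (\<forall>z\<in>A. pmf \<pi> (pick \<pi> A) \<le> pmf \<pi> z)"
proof -
  define y where "y = arg_min_on (pmf \<pi>) A"
  have "y \<in> A" "\<not> (\<exists>z\<in>A. pmf \<pi> z < pmf \<pi> y)"
    using arg_min_if_finite[OF assms, of "pmf \<pi>"] unfolding y_def by auto
  then have "y \<in> A" "\<forall>z\<in>A. pmf \<pi> y \<le> pmf \<pi> z" by (auto simp: not_less)
  then show ?thesis unfolding pick_def by (rule someI[where P="\<lambda>y. y \<in> A \<and> (\<forall>z\<in>A. pmf \<pi> y \<le> pmf \<pi> z)", OF conjI])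
qed

lemma cons_app: "cons f (obs @ [(x,p,b)]) \<longleftrightarrow> cons f obs \<and> (p = f x) = b"
  unfolding cons_def by auto

lemma Rs_fin: "finite (Rs d k obs x)"
  unfolding Rs_def by (rule finite_subset[of _ "{..k}"]) auto

lemma Rs_ne:
  assumes "bandit_realizable UNIV (HH d k) obs"
  shows "Rs d k obs x \<noteq> {}"
proof -
  obtain f where f: "f \<in> HH d k" "cons f obs" using assms real_iff by blast
  then have "f x \<in> Rs d k obs x" unfolding Rs_def real_iff using HH_le[OF f(1)] by (auto simp: cons_app)
  then show ?thesis by blast
qed

definition advy :: "nat \<Rightarrow> nat \<Rightarrow> ((nat \<times> nat \<times> nat) list \<Rightarrow> nat) \<Rightarrow> (nat \<times> nat \<times> nat) list \<Rightarrow> nat pmf \<Rightarrow> nat pmf" where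
  "advy d k ax h \<pi> = return_pmf (pick \<pi> (Rs d k (obs_of h) (ax h)))"

lemma obs_of_app[simp]: "obs_of (h @ [(x,p,y)]) = obs_of h @ [(x,p,p=y)]"
  unfolding obs_of_def by simp

lemma obs_of_Nil[simp]: "obs_of [] = []"
  unfolding obs_of_def by simp

lemma advy_step:
  fixes \<pi> :: "nat pmf" and ax :: "(nat \<times> nat \<times> nat) list \<Rightarrow> nat"
  assumes "bandit_realizable UNIV (HH d k) (obs_of h)"
  defines "y0 \<equiv> pick \<pi> (Rs d k (obs_of h) (ax h))"
  shows "y0 \<in> Rs d k (obs_of h) (ax h)" "\<forall>z\<in>Rs d k (obs_of h) (ax h). pmf \<pi> y0 \<le> pmf \<pi> z"
    "bandit_realizable UNIV (HH d k) (obs_of h @ [(ax h, p, p = y0)])"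
proof -
  show y0: "y0 \<in> Rs d k (obs_of h) (ax h)" "\<forall>z\<in>Rs d k (obs_of h) (ax h). pmf \<pi> y0 \<le> pmf \<pi> z"
    using pick_prop[OF Rs_fin Rs_ne[OF assms(1)]] unfolding y0_def by auto
  then obtain f where "f \<in> HH d k" "cons f (obs_of h @ [(ax h, y0, True)])" unfolding Rs_def real_iff by auto
  then show "bandit_realizable UNIV (HH d k) (obs_of h @ [(ax h, p, p = y0)])"
    unfolding real_iff by (auto simp: cons_app)
qed

lemma advy_valid: "valid_adversary UNIV (HH d k) k L ax (advy d k ax)"
  unfolding valid_adversary_def Let_def
proof (intro allI impI conjI ballI)
  fix h assume r: "bandit_realizable UNIV (HH d k) (obs_of h)"
  show "set_pmf (advy d k ax h (L (obs_of h) (ax h))) \<subseteq> {0..k}"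
    using advy_step(1)[OF r] unfolding advy_def Rs_def by auto
  fix p y assume "y \<in> set_pmf (advy d k ax h (L (obs_of h) (ax h)))"
  then show "bandit_realizable UNIV (HH d k) (obs_of h @ [(ax h, p, p = y)])"
    using advy_step(3)[OF r] unfolding advy_def by auto
qed

abbreviation EE where "EE L ax ay n h \<equiv> (\<integral>\<^sup>+m. of_nat m \<partial>measure_pmf (play L ax ay n h))"

lemma play_Suc_int:
  "EE L ax ay (Suc n) h = (\<integral>\<^sup>+p. \<integral>\<^sup>+y. (of_nat (if p = y then 0 else 1) + EE L ax ay n (h @ [(ax h, p, y)]))
      \<partial>measure_pmf (ay h (L (obs_of h) (ax h))) \<partial>measure_pmf (L (obs_of h) (ax h)))"
  by (simp add: Let_def nn_integral_add)

lemma play_Suc_advy: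
  "EE L ax (advy d k ax) (Suc n) h = (\<integral>\<^sup>+p. (of_nat (if p = pick (L (obs_of h) (ax h)) (Rs d k (obs_of h) (ax h)) then 0 else 1)
      + EE L ax (advy d k ax) n (h @ [(ax h, p, pick (L (obs_of h) (ax h)) (Rs d k (obs_of h) (ax h)))])) \<partial>measure_pmf (L (obs_of h) (ax h)))"
  unfolding play_Suc_int by (simp add: advy_def)

lemma emeasure_ne:
  "emeasure (measure_pmf \<pi>) {p. p \<noteq> y0} = ennreal (1 - pmf \<pi> y0)"
proof -
  have "{p. p \<noteq> y0} = UNIV - {y0}" by auto
  moreover have "measure (measure_pmf \<pi>) (UNIV - {y0}) = measure (measure_pmf \<pi>) UNIV - measure (measure_pmf \<pi>) {y0}"
    by (rule measure_pmf.finite_measure_Diff) auto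
  ultimately have "measure (measure_pmf \<pi>) {p. p \<noteq> y0} = 1 - pmf \<pi> y0"
    by (simp add: measure_pmf_single)
  then show ?thesis by (simp add: measure_pmf.emeasure_eq_measure)
qed

lemma lower_step:
  fixes c :: real
  assumes c: "0 \<le> c" and F: "\<And>p. p \<in> set_pmf \<pi> \<Longrightarrow> p \<noteq> y0 \<Longrightarrow> ennreal c \<le> G p"
  shows "ennreal ((1 + c) * (1 - pmf \<pi> y0)) \<le> (\<integral>\<^sup>+p. (of_nat (if p = y0 then 0 else 1) + G p) \<partial>measure_pmf \<pi>)"
proof -
  have "(\<integral>\<^sup>+p. ennreal (1 + c) * indicator {p. p \<noteq> y0} p \<partial>measure_pmf \<pi>) \<le> (\<integral>\<^sup>+p. (of_nat (if p = y0 then 0 else 1) + G p) \<partial>measure_pmf \<pi>)"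
  proof (rule nn_integral_mono_AE)
    show "AE p in measure_pmf \<pi>. ennreal (1 + c) * indicator {p. p \<noteq> y0} p \<le> of_nat (if p = y0 then 0 else 1) + G p"
      unfolding AE_measure_pmf_iff
    proof
      fix p assume "p \<in> set_pmf \<pi>"
      then show "ennreal (1 + c) * indicator {p. p \<noteq> y0} p \<le> of_nat (if p = y0 then 0 else 1) + G p"
        using F[of p] c by (cases "p = y0") (auto simp: ennreal_plus[symmetric] add_mono)
    qed
  qed
  moreover have "(\<integral>\<^sup>+p. ennreal (1 + c) * indicator {p. p \<noteq> y0} p \<partial>measure_pmf \<pi>) = ennreal ((1 + c) * (1 - pmf \<pi> y0))"
    using c by (simp add: nn_integral_cmult_indicator emeasure_ne ennreal_mult pmf_le_1)
  ultimately show ?thesis by simp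
qed

lemma lower_step2:
  fixes c :: real
  assumes c: "0 \<le> c" and F: "\<And>p. p \<in> set_pmf \<pi> \<Longrightarrow> ennreal c \<le> G p"
  shows "ennreal ((1 - pmf \<pi> y0) + c) \<le> (\<integral>\<^sup>+p. (of_nat (if p = y0 then 0 else 1) + G p) \<partial>measure_pmf \<pi>)"
proof -
  have "(\<integral>\<^sup>+p. (indicator {p. p \<noteq> y0} p + ennreal c) \<partial>measure_pmf \<pi>) \<le> (\<integral>\<^sup>+p. (of_nat (if p = y0 then 0 else 1) + G p) \<partial>measure_pmf \<pi>)"
  proof (rule nn_integral_mono_AE)
    show "AE p in measure_pmf \<pi>. indicator {p. p \<noteq> y0} p + ennreal c \<le> of_nat (if p = y0 then 0 else 1) + G p"
      unfolding AE_measure_pmf_iff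
    proof
      fix p assume "p \<in> set_pmf \<pi>"
      then show "indicator {p. p \<noteq> y0} p + ennreal c \<le> of_nat (if p = y0 then 0 else 1) + G p"
        using F[of p] by (cases "p = y0") (auto intro: add_mono)
    qed
  qed
  moreover have "(\<integral>\<^sup>+p. (indicator {p. p \<noteq> y0} p + ennreal c) \<partial>measure_pmf \<pi>) = ennreal ((1 - pmf \<pi> y0) + c)"
    using c by (simp add: nn_integral_add emeasure_ne ennreal_plus pmf_le_1)
  ultimately show ?thesis by simp
qed

lemma pmf_two_le:
  assumes "a \<noteq> b"
  shows "pmf \<pi> a + pmf \<pi> b \<le> 1"
proof -
  have "pmf \<pi> a + pmf \<pi> b = measure (measure_pmf \<pi>) {a,b}"
    using assms by (simp add: measure_measure_pmf_finite)
  then show ?thesis by (simp add: measure_pmf.prob_le_1)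
qed

lemma pmf_min_le:
  assumes "finite A" "y \<in> A" "\<forall>z\<in>A. pmf \<pi> y \<le> pmf \<pi> z"
  shows "real (card A) * pmf \<pi> y \<le> 1"
proof -
  have "real (card A) * pmf \<pi> y = (\<Sum>z\<in>A. pmf \<pi> y)" by simp
  also have "\<dots> \<le> (\<Sum>z\<in>A. pmf \<pi> z)" using assms by (intro sum_mono) auto
  also have "\<dots> = measure (measure_pmf \<pi>) A" using assms by (simp add: measure_measure_pmf_finite)
  also have "\<dots> \<le> 1" by (simp add: measure_pmf.prob_le_1)
  finally show ?thesis .
qed

(* k-part: always query point 0 *)
lemma Rs_shrink:
  assumes "p \<noteq> y0"
  shows "Rs d k obs x - {p} \<subseteq> Rs d k (obs @ [(x,p,p=y0)]) x"
proof
  fix z assume z: "z \<in> Rs d k obs x - {p}"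
  then obtain f where f: "f \<in> HH d k" "cons f (obs @ [(x,z,True)])" "z \<le> k" unfolding Rs_def real_iff by auto
  then have "f x = z" "cons f obs" unfolding cons_def by auto
  then have "cons f ((obs @ [(x,p,p=y0)]) @ [(x,z,True)])" using z assms unfolding cons_def by auto
  then show "z \<in> Rs d k (obs @ [(x,p,p=y0)]) x" unfolding Rs_def real_iff using f by auto
qed

lemma real_ineq_k:
  fixes n r :: nat and q :: real
  assumes "1 \<le> r" "real r * q \<le> 1" "0 \<le> q"
  shows "real (min (Suc n) (r - 1)) / 2 \<le> (1 + real (min n (r - 2)) / 2) * (1 - q)"
proof (cases "r = 1")
  case True then show ?thesis using assms by simp
next
  case False
  then have r2: "r \<ge> 2" using assms by simp
  have q: "q \<le> 1 / r" using assms r2 by (simp add: field_simps)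
  have "1 - q \<ge> 1 - 1 / r" using q by simp
  moreover have "0 \<le> 1 + real (min n (r - 2)) / 2" by simp
  ultimately have A: "(1 + real (min n (r - 2)) / 2) * (1 - 1 / r) \<le> (1 + real (min n (r - 2)) / 2) * (1 - q)"
    by (intro mult_left_mono) auto
  have B: "real (min (Suc n) (r - 1)) / 2 \<le> (1 + real (min n (r - 2)) / 2) * (1 - 1 / r)"
  proof (cases "n \<le> r - 2")
    case True
    have "Suc n \<le> r - 1" using True r2 by arith
    then have e1: "min (Suc n) (r - 1) = Suc n" "min n (r-2) = n" using True by auto
    have "n + 2 \<le> r" using True r2 by arith
    then have "real (n + 2) \<le> real r" by (simp only: of_nat_le_iff)
    then have hn: "real n + 2 \<le> real r" by simp
    have eq: "(2 + real n) * (real r - 1) - (real n + 1) * real r = real r - 2 - real n" by (simp add: algebra_simps)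
    have "(real n + 1) * real r \<le> (2 + real n) * (real r - 1)" using eq hn by linarith
    then show ?thesis using r2 unfolding e1 by (simp add: field_simps)
  next
    case False
    have "r - 1 \<le> Suc n" "r - 2 \<le> n" using False r2 by arith+
    then have e1: "min (Suc n) (r - 1) = r - 1" "min n (r-2) = r - 2" by auto
    have rr: "real (r - 1) = real r - 1" "real (r - 2) = real r - 2" using r2 by (auto simp: of_nat_diff)
    have "(real r - 1) * real r \<le> (2 + (real r - 2)) * (real r - 1)" by (simp add: algebra_simps)
    then show ?thesis using r2 unfolding e1 rr by (simp add: field_simps)
  qed
  show ?thesis using A B by linarith
qed

lemma lower_k:
  "bandit_realizable UNIV (HH d k) (obs_of h) \<Longrightarrow>
   ennreal (real (min n (card (Rs d k (obs_of h) 0) - 1)) / 2) \<le> EE L (\<lambda>_. 0) (advy d k (\<lambda>_. 0)) n h"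
proof (induction n arbitrary: h)
  case 0 then show ?case by simp
next
  case (Suc n)
  define \<pi> where "\<pi> = L (obs_of h) 0"
  define R where "R = Rs d k (obs_of h) 0"
  define y0 where "y0 = pick \<pi> R"
  have st: "y0 \<in> R" "\<forall>z\<in>R. pmf \<pi> y0 \<le> pmf \<pi> z" "\<And>p. bandit_realizable UNIV (HH d k) (obs_of h @ [(0, p, p = y0)])"
    using advy_step[OF Suc.prems(1), where \<pi>=\<pi> and ax="\<lambda>_. 0"] unfolding y0_def R_def by auto
  define r where "r = card R"
  have "0 < card R" using st(1) Rs_fin[of d k "obs_of h" 0] unfolding R_def by (auto simp: card_gt_0_iff)
  then have r1: "1 \<le> r" unfolding r_def by simp
  have rq: "real r * pmf \<pi> y0 \<le> 1" unfolding r_def using pmf_min_le[OF _ st(1,2)] Rs_fin unfolding R_def by blast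
  have G: "ennreal (real (min n (r - 2)) / 2) \<le> EE L (\<lambda>_. 0) (advy d k (\<lambda>_. 0)) n (h @ [(0, p, y0)])"
    if "p \<in> set_pmf \<pi>" "p \<noteq> y0" for p
  proof -
    have re: "bandit_realizable UNIV (HH d k) (obs_of (h @ [(0, p, y0)]))" using st(3) by simp
    have sub: "R - {p} \<subseteq> Rs d k (obs_of (h @ [(0, p, y0)])) 0" unfolding R_def using Rs_shrink[OF that(2)] by simp
    have "r - 1 \<le> card (R - {p})" unfolding r_def using diff_card_le_card_Diff[of "{p}" R] by simp
    also have "\<dots> \<le> card (Rs d k (obs_of (h @ [(0, p, y0)])) 0)" by (rule card_mono[OF Rs_fin sub])
    finally have "min n (r - 2) \<le> min n (card (Rs d k (obs_of (h @ [(0, p, y0)])) 0) - 1)" by simp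
    then have "ennreal (real (min n (r - 2)) / 2) \<le> ennreal (real (min n (card (Rs d k (obs_of (h @ [(0, p, y0)])) 0) - 1)) / 2)"
      by (intro ennreal_leI divide_right_mono) auto
    also have "\<dots> \<le> EE L (\<lambda>_. 0) (advy d k (\<lambda>_. 0)) n (h @ [(0, p, y0)])" by (rule Suc.IH[OF re])
    finally show ?thesis .
  qed
  have "ennreal ((1 + real (min n (r - 2)) / 2) * (1 - pmf \<pi> y0)) \<le> EE L (\<lambda>_. 0) (advy d k (\<lambda>_. 0)) (Suc n) h"
    unfolding play_Suc_advy \<pi>_def[symmetric] R_def[symmetric] y0_def[symmetric]
    by (rule lower_step) (use G in auto)
  moreover have "real (min (Suc n) (r - 1)) / 2 \<le> (1 + real (min n (r - 2)) / 2) * (1 - pmf \<pi> y0)"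
    by (rule real_ineq_k[OF r1 rq]) simp
  ultimately show ?case unfolding r_def R_def by (meson ennreal_leI order_trans)
qed

lemma Rs_init: "2 \<le> k \<Longrightarrow> 1 \<le> d \<Longrightarrow> card (Rs d k [] 0) = k + 1"
proof -
  assume k: "2 \<le> k" and d: "1 \<le> d"
  have "Rs d k [] 0 = {..k}"
  proof (intro equalityI subsetI)
    fix y assume "y \<in> {..k}"
    show "y \<in> Rs d k [] 0"
    proof (cases "y = 0")
      case True
      define f where "f x = (if x = 0 then 0 else (1::nat))" for x :: nat
      have "{x. f x = 0} = {0}" unfolding f_def by auto
      then have "f \<in> HH d k" unfolding HH_def using k d by (intro CollectI exI[of _ 1]) (auto simp: f_def)
      moreover have "cons f ([] @ [(0,y,True)])" using True by (simp add: cons_def f_def)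
      ultimately show ?thesis unfolding Rs_def real_iff using True by auto
    next
      case False
      define f where "f x = y" for x :: nat
      have "{x. f x = 0} = {}" unfolding f_def using False by auto
      then have "f \<in> HH d k" unfolding HH_def using \<open>y \<in> {..k}\<close> False by (intro CollectI exI[of _ y]) (auto simp: f_def)
      moreover have "cons f ([] @ [(0,y,True)])" by (simp add: cons_def f_def)
      ultimately show ?thesis unfolding Rs_def real_iff using \<open>y \<in> {..k}\<close> by auto
    qed
  qed (auto simp: Rs_def)
  then show ?thesis by simp
qed

lemma real_empty: "bandit_realizable UNIV (HH d k) []" if "1 \<le> k"
proof -
  define f where "f x = (1::nat)" for x :: nat
  have "f \<in> HH d k" unfolding HH_def using that by (intro CollectI exI[of _ 1]) (auto simp: f_def)
  then show ?thesis unfolding real_iff cons_def by auto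
qed

lemma lower_k_final:
  assumes "2 \<le> k" "1 \<le> d"
  shows "ennreal (real k / 2) \<le> EE L (\<lambda>_. 0) (advy d k (\<lambda>_. 0)) k []"
  using lower_k[of d k "[]" k L] real_empty[of k d] assms Rs_init[OF assms] by simp

(* d-part: fresh point each round *)

lemma fresh_two:
  assumes r: "bandit_realizable UNIV (HH d k) obs" and pts: "\<forall>e\<in>set obs. fst e < t" and t: "t < d"
  shows "\<exists>s. s \<noteq> 0 \<and> 0 \<in> Rs d k obs t \<and> s \<in> Rs d k obs t"
proof -
  obtain f where f: "f \<in> HH d k" "cons f obs" using r real_iff by blast
  obtain s where s: "1 \<le> s" "s \<le> k" "\<And>x. f x = 0 \<or> f x = s" "finite {x. f x = 0}" "card {x. f x = 0} \<le> d"
    using f(1) unfolding HH_def by blast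
  define f0 where "f0 z = (if z < t then f z else if z = t then 0 else s)" for z
  define f1 where "f1 z = (if z < t then f z else s)" for z
  have z0: "{x. f0 x = 0} \<subseteq> {..t}" unfolding f0_def using s by auto
  have z1: "{x. f1 x = 0} \<subseteq> {..<t}" unfolding f1_def using s by auto
  have "card {x. f0 x = 0} \<le> card {..t}" by (rule card_mono[OF _ z0]) simp
  then have "card {x. f0 x = 0} \<le> d" using t by simp
  moreover have "finite {x. f0 x = 0}" using z0 by (rule finite_subset) simp
  moreover have "\<forall>x. f0 x = 0 \<or> f0 x = s" unfolding f0_def using s(3) by auto
  ultimately have f0H: "f0 \<in> HH d k" unfolding HH_def using s by blast
  have "card {x. f1 x = 0} \<le> card {..<t}" by (rule card_mono[OF _ z1]) simp
  then have "card {x. f1 x = 0} \<le> d" using t by simp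
  moreover have "finite {x. f1 x = 0}" using z1 by (rule finite_subset) simp
  moreover have "\<forall>x. f1 x = 0 \<or> f1 x = s" unfolding f1_def using s(3) by auto
  ultimately have f1H: "f1 \<in> HH d k" unfolding HH_def using s by blast
  have c0: "cons f0 obs" using f(2) pts unfolding cons_def f0_def by fastforce
  have c1: "cons f1 obs" using f(2) pts unfolding cons_def f1_def by fastforce
  have "0 \<in> Rs d k obs t" unfolding Rs_def real_iff using f0H c0 by (auto simp: cons_app f0_def)
  moreover have "s \<in> Rs d k obs t" unfolding Rs_def real_iff using f1H c1 s by (auto simp: cons_app f1_def)
  ultimately show ?thesis using s(1) by (intro exI[of _ s]) auto
qed

lemma lower_d:
  "bandit_realizable UNIV (HH d k) (obs_of h) \<Longrightarrow> (\<forall>e\<in>set h. fst e < length h) \<Longrightarrow>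
   ennreal (real (min n (d - length h)) / 2) \<le> EE L length (advy d k length) n h"
proof (induction n arbitrary: h)
  case 0 then show ?case by simp
next
  case (Suc n)
  define t where "t = length h"
  define \<pi> where "\<pi> = L (obs_of h) t"
  define R where "R = Rs d k (obs_of h) t"
  define y0 where "y0 = pick \<pi> R"
  have st: "y0 \<in> R" "\<forall>z\<in>R. pmf \<pi> y0 \<le> pmf \<pi> z" "\<And>p. bandit_realizable UNIV (HH d k) (obs_of h @ [(t, p, p = y0)])"
    using advy_step[OF Suc.prems(1), where \<pi>=\<pi> and ax=length] unfolding y0_def R_def t_def by auto
  show ?case
  proof (cases "t < d")
    case False then show ?thesis unfolding t_def by simp
  next
    case True
    have pts: "\<forall>e\<in>set (obs_of h). fst e < t" using Suc.prems(2) unfolding obs_of_def t_def by auto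
    obtain s where s: "s \<noteq> 0" "0 \<in> R" "s \<in> R" using fresh_two[OF Suc.prems(1) pts True] unfolding R_def by blast
    have "pmf \<pi> y0 \<le> pmf \<pi> 0" "pmf \<pi> y0 \<le> pmf \<pi> s" using st(2) s by auto
    then have "2 * pmf \<pi> y0 \<le> pmf \<pi> 0 + pmf \<pi> s" by linarith
    then have q: "pmf \<pi> y0 \<le> 1/2" using pmf_two_le[of 0 s \<pi>] s(1) by simp
    have G: "ennreal (real (min n (d - Suc t)) / 2) \<le> EE L length (advy d k length) n (h @ [(t, p, y0)])"
      if "p \<in> set_pmf \<pi>" for p
    proof -
      have re: "bandit_realizable UNIV (HH d k) (obs_of (h @ [(t, p, y0)]))" using st(3) by simp
      have "\<forall>e\<in>set (h @ [(t, p, y0)]). fst e < length (h @ [(t, p, y0)])" using Suc.prems(2) unfolding t_def by auto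
      then show ?thesis using Suc.IH[OF re] unfolding t_def by simp
    qed
    have "ennreal ((1 - pmf \<pi> y0) + real (min n (d - Suc t)) / 2) \<le> EE L length (advy d k length) (Suc n) h"
      unfolding play_Suc_advy \<pi>_def[symmetric] t_def[symmetric] R_def[symmetric] y0_def[symmetric]
      by (rule lower_step2) (use G in auto)
    moreover have "real (min (Suc n) (d - t)) / 2 \<le> (1 - pmf \<pi> y0) + real (min n (d - Suc t)) / 2"
    proof -
      have e: "d - t = Suc (d - Suc t)" using True by arith
      have "min (Suc n) (d - t) = Suc (min n (d - Suc t))" unfolding e by simp
      then have "real (min (Suc n) (d - t)) = 1 + real (min n (d - Suc t))" by simp
      then show ?thesis using q by simp
    qed
    ultimately show ?thesis unfolding t_def by (meson ennreal_leI order_trans)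
  qed
qed

lemma lower_d_final:
  assumes "1 \<le> k"
  shows "ennreal (real d / 2) \<le> EE L length (advy d k length) d []"
  using lower_d[of d k "[]" d L] real_empty[OF assms] by simp


definition kn :: "(nat \<times> nat \<times> bool) list \<Rightarrow> nat \<Rightarrow> bool" where
  "kn obs x = (\<exists>q. (x,q,True) \<in> set obs)"
definition kq :: "(nat \<times> nat \<times> bool) list \<Rightarrow> nat \<Rightarrow> nat" where
  "kq obs x = (SOME q. (x,q,True) \<in> set obs)"
definition svx :: "(nat \<times> nat \<times> bool) list \<Rightarrow> bool" where
  "svx obs = (\<exists>z p. (z,p,True) \<in> set obs \<and> p \<noteq> 0)"
definition sval :: "(nat \<times> nat \<times> bool) list \<Rightarrow> nat" where
  "sval obs = (SOME p. \<exists>z. (z,p,True) \<in> set obs \<and> p \<noteq> 0)"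

definition gmap :: "nat \<Rightarrow> nat \<Rightarrow> nat" where
  "gmap k i = (if i < k then 0 else i - k + 1)"

definition Lr :: "nat \<Rightarrow> (nat \<times> nat \<times> bool) list \<Rightarrow> nat \<Rightarrow> nat pmf" where
  "Lr k obs x = (if kn obs x then return_pmf (kq obs x)
     else if svx obs then (if (x, sval obs, False) \<in> set obs then return_pmf 0 else return_pmf (sval obs))
     else if (x,0,False) \<in> set obs then pmf_of_set {0..k}
     else map_pmf (gmap k) (pmf_of_set {..<2*k}))"

definition Z0 :: "(nat \<times> nat \<times> bool) list \<Rightarrow> nat set" where
  "Z0 obs = {x. (x,0,True) \<in> set obs}"
definition Z2 :: "(nat \<times> nat \<times> bool) list \<Rightarrow> nat set" where
  "Z2 obs = {x. (x,0,True) \<in> set obs \<or> (x, sval obs, False) \<in> set obs}"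

definition Phi :: "nat \<Rightarrow> nat \<Rightarrow> (nat \<times> nat \<times> bool) list \<Rightarrow> real" where
  "Phi d k obs = (if svx obs then real d - real (card (Z2 obs)) else real (5*d + 4*k) - 4 * real (card (Z0 obs)))"

lemma fin_Z0: "finite (Z0 obs)"
  by (rule finite_subset[of _ "fst ` set obs"]) (force simp: Z0_def)+
lemma fin_Z2: "finite (Z2 obs)"
  by (rule finite_subset[of _ "fst ` set obs"]) (force simp: Z2_def)+

lemma kq_eq: "cons f obs \<Longrightarrow> kn obs x \<Longrightarrow> kq obs x = f x"
proof -
  assume c: "cons f obs" and kx: "kn obs x"
  have "(x, kq obs x, True) \<in> set obs" using kx unfolding kn_def kq_def by (rule someI_ex)
  then show ?thesis using c unfolding cons_def by auto
qed

lemma kn_f: "cons f obs \<Longrightarrow> (x,q,True) \<in> set obs \<Longrightarrow> f x = q"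
  unfolding cons_def by auto

lemma sval_eq:
  assumes f: "f \<in> HH d k" "cons f obs" and sv: "svx obs" and nz: "f z \<noteq> 0"
  shows "sval obs = f z"
proof -
  have "\<exists>p. \<exists>z. (z,p,True) \<in> set obs \<and> p \<noteq> 0" using sv unfolding svx_def by blast
  then have "\<exists>z. (z, sval obs, True) \<in> set obs \<and> sval obs \<noteq> 0" unfolding sval_def by (rule someI_ex)
  then obtain z' where z': "(z', sval obs, True) \<in> set obs" "sval obs \<noteq> 0" by blast
  then have "f z' = sval obs" using f(2) unfolding cons_def by auto
  then show ?thesis using HH_nz[OF f(1), of z' z] z' nz by simp
qed

lemma Z0_sub: "cons f obs \<Longrightarrow> Z0 obs \<subseteq> {x. f x = 0}"
  unfolding Z0_def cons_def by auto

lemma Z2_sub: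
  assumes f: "f \<in> HH d k" "cons f obs" and sv: "svx obs"
  shows "Z2 obs \<subseteq> {x. f x = 0}"
proof
  fix x assume "x \<in> Z2 obs"
  then consider "(x,0,True) \<in> set obs" | "(x, sval obs, False) \<in> set obs" unfolding Z2_def by auto
  then show "x \<in> {x. f x = 0}"
  proof cases
    case 1 then show ?thesis using f(2) unfolding cons_def by auto
  next
    case 2
    then have ne: "f x \<noteq> sval obs" using f(2) unfolding cons_def by auto
    show ?thesis
    proof (rule ccontr)
      assume "x \<notin> {x. f x = 0}"
      then have "sval obs = f x" using sval_eq[OF f sv] by auto
      then show False using ne by simp
    qed
  qed
qed

lemma card_zero_le: "f \<in> HH d k \<Longrightarrow> A \<subseteq> {x. f x = 0} \<Longrightarrow> card A \<le> d"
proof -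
  assume "f \<in> HH d k" "A \<subseteq> {x. f x = 0}"
  moreover obtain s where "finite {x. f x = 0}" "card {x. f x = 0} \<le> d" using \<open>f \<in> HH d k\<close> unfolding HH_def by blast
  ultimately show ?thesis by (meson card_mono le_trans)
qed

lemma Phi_bounds:
  assumes f: "f \<in> HH d k" "cons f obs"
  shows "0 \<le> Phi d k obs" "\<not> svx obs \<Longrightarrow> real d + 4 * real k \<le> Phi d k obs" "svx obs \<Longrightarrow> Phi d k obs \<le> real d"
proof -
  have c0: "card (Z0 obs) \<le> d" using card_zero_le[OF f(1) Z0_sub[OF f(2)]] .
  have c2: "svx obs \<Longrightarrow> card (Z2 obs) \<le> d" using card_zero_le[OF f(1) Z2_sub[OF f]] .
  show "0 \<le> Phi d k obs" using c0 c2 unfolding Phi_def by auto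
  show "\<not> svx obs \<Longrightarrow> real d + 4 * real k \<le> Phi d k obs" using c0 unfolding Phi_def by auto
  show "svx obs \<Longrightarrow> Phi d k obs \<le> real d" unfolding Phi_def by auto
qed

lemma Phi_mono:
  assumes f: "f \<in> HH d k" "cons f (obs @ [e])"
  shows "Phi d k (obs @ [e]) \<le> Phi d k obs"
proof -
  have f0: "cons f obs" using f(2) unfolding cons_def by auto
  show ?thesis
  proof (cases "svx obs")
    case True
    then have sv': "svx (obs @ [e])" unfolding svx_def by auto
    obtain z where z: "f z \<noteq> 0"
      using True f0 unfolding svx_def cons_def by fastforce
    have "sval (obs @ [e]) = sval obs" using sval_eq[OF f(1) f(2) sv' z] sval_eq[OF f(1) f0 True z] by simp
    then have "Z2 obs \<subseteq> Z2 (obs @ [e])" unfolding Z2_def by auto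
    then have "card (Z2 obs) \<le> card (Z2 (obs @ [e]))" by (rule card_mono[OF fin_Z2])
    then show ?thesis using True sv' unfolding Phi_def by simp
  next
    case False
    show ?thesis
    proof (cases "svx (obs @ [e])")
      case True
      then show ?thesis using Phi_bounds(2)[OF f(1) f0 False] Phi_bounds(3)[OF f True] by simp
    next
      case nsv: False
      have "Z0 obs \<subseteq> Z0 (obs @ [e])" unfolding Z0_def by auto
      then have "card (Z0 obs) \<le> card (Z0 (obs @ [e]))" by (rule card_mono[OF fin_Z0])
      then show ?thesis using False nsv unfolding Phi_def by simp
    qed
  qed
qed

lemma nn_swap:
  "(\<integral>\<^sup>+p. \<integral>\<^sup>+y. G p y \<partial>measure_pmf B \<partial>measure_pmf A) = (\<integral>\<^sup>+y. \<integral>\<^sup>+p. G p y \<partial>measure_pmf A \<partial>measure_pmf B)"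
proof -
  have "(\<integral>\<^sup>+p. \<integral>\<^sup>+y. G p y \<partial>measure_pmf B \<partial>measure_pmf A)
      = (\<integral>\<^sup>+z. case_prod G z \<partial>measure_pmf (bind_pmf A (\<lambda>p. bind_pmf B (\<lambda>y. return_pmf (p,y)))))"
    by simp
  also have "\<dots> = (\<integral>\<^sup>+z. case_prod G z \<partial>measure_pmf (bind_pmf B (\<lambda>y. bind_pmf A (\<lambda>p. return_pmf (p,y)))))"
    by (subst bind_commute_pmf) (rule refl)
  also have "\<dots> = (\<integral>\<^sup>+y. \<integral>\<^sup>+p. G p y \<partial>measure_pmf A \<partial>measure_pmf B)" by simp
  finally show ?thesis .
qed

lemma avg_le:
  assumes S: "finite S" "S \<noteq> {}" and nn: "\<And>p. p \<in> S \<Longrightarrow> 0 \<le> F p" and sm: "(\<Sum>p\<in>S. F p) \<le> real (card S) * c"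
  shows "(\<integral>\<^sup>+p. ennreal (F p) \<partial>measure_pmf (pmf_of_set S)) \<le> ennreal c"
proof -
  have cp: "0 < card S" using S by (simp add: card_gt_0_iff)
  have "(\<integral>\<^sup>+p. ennreal (F p) \<partial>measure_pmf (pmf_of_set S)) = (\<Sum>p\<in>S. ennreal (F p)) / of_nat (card S)"
    using S by (simp add: nn_integral_pmf_of_set)
  also have "\<dots> = ennreal (\<Sum>p\<in>S. F p) / ennreal (real (card S))"
    using nn by (simp add: sum_ennreal ennreal_of_nat_eq_real_of_nat)
  also have "\<dots> = ennreal ((\<Sum>p\<in>S. F p) / real (card S))"
    using nn cp by (intro divide_ennreal) (auto intro: sum_nonneg)
  also have "\<dots> \<le> ennreal c"
    using sm cp by (intro ennreal_leI) (simp add: divide_le_eq mult.commute)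
  finally show ?thesis .
qed

lemma set_gmap: "0 < k \<Longrightarrow> gmap k ` {..<2*k} = {0..k}"
proof (intro equalityI subsetI)
  fix y assume k: "0 < k" and "y \<in> {0..k}"
  then show "y \<in> gmap k ` {..<2*k}"
  proof (cases "y = 0")
    case True then show ?thesis using k by (intro image_eqI[of _ _ 0]) (auto simp: gmap_def)
  next
    case False then show ?thesis using \<open>y \<in> {0..k}\<close> by (intro image_eqI[of _ _ "y + k - 1"]) (auto simp: gmap_def)
  qed
qed (auto simp: gmap_def)


definition GG :: "nat \<Rightarrow> nat \<Rightarrow> (nat \<times> nat \<times> bool) list \<Rightarrow> nat \<Rightarrow> nat \<Rightarrow> nat \<Rightarrow> real" where
  "GG d k obs x p y = (if p = y then 0 else 1) + Phi d k (obs @ [(x,p,p=y)])"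

lemma GG_basic:
  assumes "bandit_realizable UNIV (HH d k) (obs @ [(x,p,p=y)])"
  shows "0 \<le> GG d k obs x p y" "GG d k obs x p y \<le> 1 + Phi d k obs"
proof -
  obtain f where f: "f \<in> HH d k" "cons f (obs @ [(x,p,p=y)])" using assms real_iff by blast
  show "0 \<le> GG d k obs x p y" unfolding GG_def using Phi_bounds(1)[OF f] by simp
  have a: "(if p = y then 0 else 1::real) \<le> 1" by simp
  show "GG d k obs x p y \<le> 1 + Phi d k obs" unfolding GG_def using Phi_mono[OF f] a by linarith
qed

lemma GG_eq:
  assumes "bandit_realizable UNIV (HH d k) (obs @ [(x,y,True)])"
  shows "GG d k obs x y y \<le> Phi d k obs"
proof -
  obtain f where f: "f \<in> HH d k" "cons f (obs @ [(x,y,True)])" using assms real_iff by blast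
  show ?thesis unfolding GG_def using Phi_mono[OF f] by simp
qed

lemma GG_hit_nz:
  assumes "bandit_realizable UNIV (HH d k) (obs @ [(x,y,True)])" "y \<noteq> 0"
  shows "GG d k obs x y y \<le> real d"
proof -
  obtain f where f: "f \<in> HH d k" "cons f (obs @ [(x,y,True)])" using assms real_iff by blast
  have "svx (obs @ [(x,y,True)])" using assms(2) unfolding svx_def by auto
  then show ?thesis unfolding GG_def using Phi_bounds(3)[OF f] by simp
qed

lemma inner_bound:
  assumes f: "f \<in> HH d k" "cons f obs" and k: "1 \<le> k"
    and y: "y \<le> k"
    and re: "\<forall>p\<in>set_pmf (Lr k obs x). bandit_realizable UNIV (HH d k) (obs @ [(x,p,p=y)])"
  shows "(\<integral>\<^sup>+p. ennreal (GG d k obs x p y) \<partial>measure_pmf (Lr k obs x)) \<le> ennreal (Phi d k obs)"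
proof (cases "kn obs x")
  case True
  define q where "q = kq obs x"
  have pi: "Lr k obs x = return_pmf q" using True unfolding Lr_def q_def by simp
  have "(x, q, True) \<in> set obs" using True unfolding kn_def q_def kq_def by (rule someI_ex)
  moreover obtain f' where f': "f' \<in> HH d k" "cons f' (obs @ [(x,q,q=y)])" using re pi real_iff by auto
  ultimately have "f' x = q" unfolding cons_def by auto
  then have "q = y" using f'(2) unfolding cons_def by auto
  then have "GG d k obs x q y \<le> Phi d k obs" using GG_eq re pi by auto
  then show ?thesis unfolding pi by (simp add: ennreal_leI)
next
  case nkn: False
  show ?thesis
  proof (cases "svx obs")
    case sv: True
    obtain z where z: "f z \<noteq> 0" using sv f(2) unfolding svx_def cons_def by fastforce
    show ?thesis
    proof (cases "(x, sval obs, False) \<in> set obs")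
      case True
      have pi: "Lr k obs x = return_pmf 0" using True nkn sv unfolding Lr_def by simp
      obtain f' where f': "f' \<in> HH d k" "cons f' (obs @ [(x,0,0=y)])" using re pi real_iff by auto
      have f'o: "cons f' obs" using f'(2) unfolding cons_def by auto
      have ne: "f' x \<noteq> sval obs" using True f'o unfolding cons_def by auto
      have "f' x = 0"
      proof (rule ccontr)
        assume "f' x \<noteq> 0"
        then have "sval obs = f' x" by (rule sval_eq[OF f'(1) f'o sv])
        then show False using ne by simp
      qed
      then have "y = 0" using f'(2) unfolding cons_def by auto
      then have "GG d k obs x 0 y \<le> Phi d k obs" using GG_eq re pi by auto
      then show ?thesis unfolding pi by (simp add: ennreal_leI)
    next
      case False
      define s where "s = sval obs"
      have pi: "Lr k obs x = return_pmf s" using False nkn sv unfolding Lr_def s_def by simp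
      have "GG d k obs x s y \<le> Phi d k obs"
      proof (cases "s = y")
        case True then show ?thesis using GG_eq re pi by auto
      next
        case ne: False
        obtain f' where f': "f' \<in> HH d k" "cons f' (obs @ [(x,s,False)])" using re pi real_iff ne by auto
        have f'o: "cons f' obs" using f'(2) unfolding cons_def by auto
        obtain z0 p0 where zp: "(z0,p0,True) \<in> set obs" "p0 \<noteq> 0" using sv unfolding svx_def by blast
        have z': "f' z0 \<noteq> 0" using zp f'o unfolding cons_def by auto
        have sv': "svx (obs @ [(x,s,False)])" using sv unfolding svx_def by auto
        have "sval (obs @ [(x,s,False)]) = sval obs" using sval_eq[OF f'(1) f'(2) sv' z'] sval_eq[OF f'(1) f'o sv z'] by simp
        then have Z: "Z2 (obs @ [(x,s,False)]) = insert x (Z2 obs)" unfolding Z2_def s_def by auto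
        have xn: "x \<notin> Z2 obs" using nkn False unfolding Z2_def kn_def by auto
        have "card (Z2 (obs @ [(x,s,False)])) = Suc (card (Z2 obs))" unfolding Z using xn fin_Z2 by simp
        then have "Phi d k (obs @ [(x,s,False)]) = Phi d k obs - 1" using sv sv' unfolding Phi_def by simp
        then show ?thesis unfolding GG_def using ne by simp
      qed
      then show ?thesis unfolding pi by (simp add: ennreal_leI)
    qed
  next
    case nsv: False
    have Phi_big: "real d + 4 * real k \<le> Phi d k obs" by (rule Phi_bounds(2)[OF f nsv])
    show ?thesis
    proof (cases "(x,0,False) \<in> set obs")
      case True
      have pi: "Lr k obs x = pmf_of_set {0..k}" using True nkn nsv unfolding Lr_def by simp
      have sp: "set_pmf (Lr k obs x) = {0..k}" unfolding pi by simp
      have yin: "y \<in> set_pmf (Lr k obs x)" using sp y by simp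
      have rey: "bandit_realizable UNIV (HH d k) (obs @ [(x,y,True)])" using bspec[OF re yin] by simp
      then obtain fy where fy: "fy \<in> HH d k" "cons fy (obs @ [(x,y,True)])" using real_iff by blast
      have y0: "y \<noteq> 0" using fy(2) True unfolding cons_def by auto
      have hit: "GG d k obs x y y \<le> real d" using GG_hit_nz[OF rey y0] .
      have oth: "GG d k obs x p y \<le> 1 + Phi d k obs" if "p \<in> {0..k}" for p using GG_basic(2) re sp that by auto
      have "(\<Sum>p\<in>{0..k}. GG d k obs x p y) = GG d k obs x y y + (\<Sum>p\<in>{0..k}-{y}. GG d k obs x p y)"
        using y by (simp add: sum.remove)
      also have "\<dots> \<le> real d + (\<Sum>p\<in>{0..k}-{y}. 1 + Phi d k obs)" using hit oth by (intro add_mono sum_mono) auto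
      also have "\<dots> = real d + real k * (1 + Phi d k obs)" using y by simp
      also have "\<dots> \<le> real (card {0..k}) * Phi d k obs" using Phi_big by (simp add: algebra_simps)
      finally have sm: "(\<Sum>p\<in>{0..k}. GG d k obs x p y) \<le> real (card {0..k}) * Phi d k obs" .
      show ?thesis unfolding pi by (rule avg_le[OF _ _ _ sm]) (use GG_basic(1) re sp in auto)
    next
      case False
      have pi: "Lr k obs x = map_pmf (gmap k) (pmf_of_set {..<2*k})" using False nkn nsv unfolding Lr_def by simp
      have "0 \<in> {..<2*k}" using k by simp
      then have ne2: "{..<2*k} \<noteq> {}" by blast
      have sp: "set_pmf (Lr k obs x) = {0..k}" unfolding pi using k set_gmap[of k] ne2 by simp
      have yin: "y \<in> set_pmf (Lr k obs x)" using sp y by simp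
      have rey: "bandit_realizable UNIV (HH d k) (obs @ [(x,y,True)])" using bspec[OF re yin] by simp
      have oth: "GG d k obs x (gmap k i) y \<le> 1 + Phi d k obs" if "i < 2*k" for i
      proof -
        have "gmap k i \<in> gmap k ` {..<2*k}" using that by simp
        then have g: "gmap k i \<in> set_pmf (Lr k obs x)" using sp set_gmap[of k] k by simp
        show ?thesis using GG_basic(2) bspec[OF re g] by blast
      qed
      have sm: "(\<Sum>i\<in>{..<2*k}. GG d k obs x (gmap k i) y) \<le> real (card {..<2*k}) * Phi d k obs"
      proof (cases "y = 0")
        case True
        have Z: "Z0 (obs @ [(x,0,True)]) = insert x (Z0 obs)" unfolding Z0_def by auto
        have xn: "x \<notin> Z0 obs" using nkn unfolding Z0_def kn_def by auto
        have nsv': "\<not> svx (obs @ [(x,0,True)])" using nsv unfolding svx_def by auto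
        have "card (Z0 (obs @ [(x,0,True)])) = Suc (card (Z0 obs))" unfolding Z using xn fin_Z0 by simp
        then have h0: "GG d k obs x 0 0 = Phi d k obs - 4" unfolding GG_def Phi_def using nsv nsv' by simp
        have sp2: "{..<2*k} = {..<k} \<union> {k..<2*k}" by auto
        have "(\<Sum>i\<in>{..<2*k}. GG d k obs x (gmap k i) y) = (\<Sum>i\<in>{..<k}. GG d k obs x (gmap k i) y) + (\<Sum>i\<in>{k..<2*k}. GG d k obs x (gmap k i) y)"
          unfolding sp2 by (rule sum.union_disjoint) auto
        also have "\<dots> \<le> (\<Sum>i\<in>{..<k}. Phi d k obs - 4) + (\<Sum>i\<in>{k..<2*k}. 1 + Phi d k obs)"
        proof (rule add_mono)
          show "(\<Sum>i\<in>{..<k}. GG d k obs x (gmap k i) y) \<le> (\<Sum>i\<in>{..<k}. Phi d k obs - 4)"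
            by (rule sum_mono) (simp add: gmap_def h0 True)
          show "(\<Sum>i\<in>{k..<2*k}. GG d k obs x (gmap k i) y) \<le> (\<Sum>i\<in>{k..<2*k}. 1 + Phi d k obs)"
            by (rule sum_mono) (rule oth, simp)
        qed
        also have "\<dots> = real k * (Phi d k obs - 4) + real k * (1 + Phi d k obs)" by simp
        also have "\<dots> \<le> real (card {..<2*k}) * Phi d k obs" by (simp add: algebra_simps)
        finally show ?thesis .
      next
        case yn: False
        define j where "j = y + k - 1"
        have j: "j \<in> {..<2*k}" "gmap k j = y" using yn y unfolding j_def gmap_def by auto
        have hit: "GG d k obs x (gmap k j) y \<le> real d" using GG_hit_nz[OF rey yn] j(2) by simp
        have "(\<Sum>i\<in>{..<2*k}. GG d k obs x (gmap k i) y) = GG d k obs x (gmap k j) y + (\<Sum>i\<in>{..<2*k}-{j}. GG d k obs x (gmap k i) y)"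
          using j(1) by (simp add: sum.remove)
        also have "\<dots> \<le> real d + (\<Sum>i\<in>{..<2*k}-{j}. 1 + Phi d k obs)" using hit oth by (intro add_mono sum_mono) auto
        also have "\<dots> = real d + (2 * real k - 1) * (1 + Phi d k obs)" using j(1) k by (simp add: of_nat_diff)
        also have "\<dots> \<le> real (card {..<2*k}) * Phi d k obs" using Phi_big k by (simp add: algebra_simps)
        finally show ?thesis .
      qed
      have "(\<integral>\<^sup>+p. ennreal (GG d k obs x p y) \<partial>measure_pmf (Lr k obs x)) = (\<integral>\<^sup>+i. ennreal (GG d k obs x (gmap k i) y) \<partial>measure_pmf (pmf_of_set {..<2*k}))"
        unfolding pi by simp
      also have "\<dots> \<le> ennreal (Phi d k obs)"
      proof (rule avg_le[OF _ _ _ sm])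
        fix i assume "i \<in> {..<2*k}"
        then have "gmap k i \<in> gmap k ` {..<2*k}" by simp
        then have g: "gmap k i \<in> set_pmf (Lr k obs x)" using sp set_gmap[of k] k by simp
        show "0 \<le> GG d k obs x (gmap k i) y" using GG_basic(1) bspec[OF re g] by blast
      qed (use ne2 in auto)
      finally show ?thesis .
    qed
  qed
qed

lemma one_step:
  assumes f: "f \<in> HH d k" "cons f obs" and k: "1 \<le> k"
    and tau: "set_pmf \<tau> \<subseteq> {0..k}"
    and re: "\<forall>p\<in>set_pmf (Lr k obs x). \<forall>y\<in>set_pmf \<tau>. bandit_realizable UNIV (HH d k) (obs @ [(x,p,p=y)])"
  shows "(\<integral>\<^sup>+p. \<integral>\<^sup>+y. ennreal (GG d k obs x p y) \<partial>measure_pmf \<tau> \<partial>measure_pmf (Lr k obs x)) \<le> ennreal (Phi d k obs)"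
proof -
  have "(\<integral>\<^sup>+p. \<integral>\<^sup>+y. ennreal (GG d k obs x p y) \<partial>measure_pmf \<tau> \<partial>measure_pmf (Lr k obs x))
      = (\<integral>\<^sup>+y. \<integral>\<^sup>+p. ennreal (GG d k obs x p y) \<partial>measure_pmf (Lr k obs x) \<partial>measure_pmf \<tau>)" by (rule nn_swap)
  also have "\<dots> \<le> (\<integral>\<^sup>+y. ennreal (Phi d k obs) \<partial>measure_pmf \<tau>)"
  proof (rule nn_integral_mono_AE)
    show "AE y in measure_pmf \<tau>. (\<integral>\<^sup>+p. ennreal (GG d k obs x p y) \<partial>measure_pmf (Lr k obs x)) \<le> ennreal (Phi d k obs)"
      unfolding AE_measure_pmf_iff using inner_bound[OF f k] tau re by auto
  qed
  also have "\<dots> = ennreal (Phi d k obs)" by simp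
  finally show ?thesis .
qed

lemma upper_main:
  assumes V: "valid_adversary UNIV (HH d k) k (Lr k) ax ay" and k: "1 \<le> k"
  shows "bandit_realizable UNIV (HH d k) (obs_of h) \<Longrightarrow> EE (Lr k) ax ay n h \<le> ennreal (Phi d k (obs_of h))"
proof (induction n arbitrary: h)
  case 0 then show ?case by simp
next
  case (Suc n)
  define x where "x = ax h"
  define \<pi> where "\<pi> = Lr k (obs_of h) x"
  define \<tau> where "\<tau> = ay h \<pi>"
  have VV: "set_pmf \<tau> \<subseteq> {0..k}" "\<forall>p\<in>set_pmf \<pi>. \<forall>y\<in>set_pmf \<tau>. bandit_realizable UNIV (HH d k) (obs_of h @ [(x,p,p=y)])"
    using V Suc.prems unfolding valid_adversary_def Let_def x_def \<pi>_def \<tau>_def by auto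
  obtain f where f: "f \<in> HH d k" "cons f (obs_of h)" using Suc.prems real_iff by blast
  have "EE (Lr k) ax ay (Suc n) h = (\<integral>\<^sup>+p. \<integral>\<^sup>+y. (of_nat (if p = y then 0 else 1) + EE (Lr k) ax ay n (h @ [(x, p, y)])) \<partial>measure_pmf \<tau> \<partial>measure_pmf \<pi>)"
    unfolding play_Suc_int x_def \<pi>_def \<tau>_def by simp
  also have "\<dots> \<le> (\<integral>\<^sup>+p. \<integral>\<^sup>+y. ennreal (GG d k (obs_of h) x p y) \<partial>measure_pmf \<tau> \<partial>measure_pmf \<pi>)"
  proof (rule nn_integral_mono_AE, unfold AE_measure_pmf_iff, intro ballI)
    fix p assume p: "p \<in> set_pmf \<pi>"
    show "(\<integral>\<^sup>+y. (of_nat (if p = y then 0 else 1) + EE (Lr k) ax ay n (h @ [(x, p, y)])) \<partial>measure_pmf \<tau>)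
       \<le> (\<integral>\<^sup>+y. ennreal (GG d k (obs_of h) x p y) \<partial>measure_pmf \<tau>)"
    proof (rule nn_integral_mono_AE, unfold AE_measure_pmf_iff, intro ballI)
      fix y assume y: "y \<in> set_pmf \<tau>"
      have r: "bandit_realizable UNIV (HH d k) (obs_of (h @ [(x,p,y)]))" using VV p y by simp
      have IH: "EE (Lr k) ax ay n (h @ [(x, p, y)]) \<le> ennreal (Phi d k (obs_of h @ [(x,p,p=y)]))"
        using Suc.IH[OF r] by simp
      obtain g where g: "g \<in> HH d k" "cons g (obs_of h @ [(x,p,p=y)])" using r real_iff by auto
      have nn: "0 \<le> Phi d k (obs_of h @ [(x,p,p=y)])" by (rule Phi_bounds(1)[OF g])
      have "of_nat (if p = y then 0 else 1) + EE (Lr k) ax ay n (h @ [(x, p, y)])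
          \<le> ennreal (if p = y then 0 else 1) + ennreal (Phi d k (obs_of h @ [(x,p,p=y)]))"
        using IH by (intro add_mono) auto
      also have "\<dots> = ennreal (GG d k (obs_of h) x p y)" unfolding GG_def using nn by (simp add: ennreal_plus)
      finally show "of_nat (if p = y then 0 else 1) + EE (Lr k) ax ay n (h @ [(x, p, y)]) \<le> ennreal (GG d k (obs_of h) x p y)" .
    qed
  qed
  also have "\<dots> \<le> ennreal (Phi d k (obs_of h))"
    unfolding \<pi>_def by (rule one_step[OF f k]) (use VV in \<open>auto simp: \<pi>_def\<close>)
  finally show ?case .
qed

lemma adap_upper:
  assumes k: "1 \<le> k"
  shows "opt_bandit_adap UNIV (HH d k) k \<le> ennreal (real (5*d + 4*k))"
proof -
  have "opt_bandit_adap UNIV (HH d k) k \<le> (SUP A\<in>{(ax, ay). valid_adversary UNIV (HH d k) k (Lr k) ax ay}.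
        SUP T. \<integral>\<^sup>+ m. of_nat m \<partial>measure_pmf (play (Lr k) (fst A) (snd A) T []))"
    unfolding opt_bandit_adap_def by (rule INF_lower) simp
  also have "\<dots> \<le> ennreal (real (5*d + 4*k))"
  proof (rule SUP_least, rule SUP_least)
    fix A T assume "A \<in> {(ax, ay). valid_adversary UNIV (HH d k) k (Lr k) ax ay}"
    then have V: "valid_adversary UNIV (HH d k) k (Lr k) (fst A) (snd A)" by auto
    have "EE (Lr k) (fst A) (snd A) T [] \<le> ennreal (Phi d k (obs_of []))"
      using upper_main[OF V k, of "[]" T] real_empty[OF k] by simp
    also have "Phi d k (obs_of []) = real (5*d + 4*k)" unfolding Phi_def svx_def Z0_def by simp
    finally show "EE (Lr k) (fst A) (snd A) T [] \<le> ennreal (real (5*d + 4*k))" .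
  qed
  finally show ?thesis .
qed


lemma HH_ne: "1 \<le> k \<Longrightarrow> (\<lambda>_. 1) \<in> HH d k"
  unfolding HH_def by auto

lemma full_opt: assumes "2 \<le> k" shows "opt_full_det UNIV (HH d k) = of_nat (d + 1)"
proof (rule antisym)
  have "opt_full_det UNIV (HH d k) \<le> (SUP S\<in>patterns UNIV (HH d k). of_nat (full_mistakes Lf [] S))"
    unfolding opt_full_det_def by (rule INF_lower) simp
  also have "\<dots> \<le> of_nat (d + 1)"
  proof (rule SUP_least)
    fix S assume "S \<in> patterns UNIV (HH d k)"
    moreover have "(\<lambda>_. 1) \<in> HH d k" using HH_ne assms by simp
    ultimately have "full_mistakes Lf [] S \<le> d + 1" using full_upper by blast
    then have "real (full_mistakes Lf [] S) \<le> real (d + 1)" by (simp only: of_nat_le_iff)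
    then show "(of_nat (full_mistakes Lf [] S) :: ennreal) \<le> of_nat (d + 1)"
      unfolding ennreal_of_nat_eq_real_of_nat by (rule ennreal_leI)
  qed
  finally show "opt_full_det UNIV (HH d k) \<le> of_nat (d + 1)" .
next
  show "of_nat (d + 1) \<le> opt_full_det UNIV (HH d k)"
    unfolding opt_full_det_def
  proof (rule INF_greatest)
    fix L
    obtain S where S: "S \<in> patterns UNIV (HH d k)" "full_mistakes L [] S = d + 1" using full_lower[OF assms] by blast
    show "of_nat (d + 1) \<le> (SUP S\<in>patterns UNIV (HH d k). (of_nat (full_mistakes L [] S) :: ennreal))"
      using S by (intro SUP_upper2[of S]) auto
  qed
qed

lemma det_opt_lower: assumes "1 \<le> k" shows "ennreal (1/4 * real d * real k) \<le> opt_bandit_det UNIV (HH d k)"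
  unfolding opt_bandit_det_def
proof (rule INF_greatest)
  fix L
  obtain S where S: "S \<in> patterns UNIV (HH d k)" "d * k \<le> bandit_mistakes L [] S" using det_lower[OF assms] by blast
  have "ennreal (1/4 * real d * real k) \<le> of_nat (bandit_mistakes L [] S)"
  proof -
    have "1/4 * real d * real k \<le> real (bandit_mistakes L [] S)"
    proof -
      have "real (d * k) \<le> real (bandit_mistakes L [] S)" using S(2) by (simp only: of_nat_le_iff)
      then show ?thesis by simp
    qed
    then show ?thesis by (simp add: ennreal_of_nat_eq_real_of_nat ennreal_leI)
  qed
  also have "\<dots> \<le> (SUP S\<in>patterns UNIV (HH d k). of_nat (bandit_mistakes L [] S))"
    using S(1) by (rule SUP_upper)
  finally show "ennreal (1/4 * real d * real k) \<le> (SUP S\<in>patterns UNIV (HH d k). of_nat (bandit_mistakes L [] S))" .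
qed

lemma det_opt_upper: assumes "1 \<le> d" shows "opt_bandit_det UNIV (HH d k) \<le> ennreal (5 * real d * real k)"
proof -
  have "opt_bandit_det UNIV (HH d k) \<le> (SUP S\<in>patterns UNIV (HH d k). of_nat (bandit_mistakes (Ld d k) [] S))"
    unfolding opt_bandit_det_def by (rule INF_lower) simp
  also have "\<dots> \<le> ennreal (5 * real d * real k)"
  proof (rule SUP_least)
    fix S assume "S \<in> patterns UNIV (HH d k)"
    then have b: "bandit_mistakes (Ld d k) [] S \<le> k * (d+1)" by (rule det_upper)
    have "real (bandit_mistakes (Ld d k) [] S) \<le> real (k * (d+1))" using b by (simp only: of_nat_le_iff)
    also have "\<dots> \<le> 5 * real d * real k"
    proof -
      have dk: "1 * real k \<le> real d * real k" by (rule mult_right_mono) (use assms in auto)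
      have eq: "real (k * (d+1)) = real d * real k + real k" by (simp add: algebra_simps)
      have eq2: "5 * real d * real k = 5 * (real d * real k)" by simp
      show ?thesis unfolding eq eq2 using dk by linarith
    qed
    finally show "(of_nat (bandit_mistakes (Ld d k) [] S) :: ennreal) \<le> ennreal (5 * real d * real k)"
      by (simp add: ennreal_of_nat_eq_real_of_nat ennreal_leI)
  qed
  finally show ?thesis .
qed

lemma adap_lower: assumes k: "2 \<le> k" and d: "1 \<le> d"
  shows "ennreal (1/4 * (real d + real k)) \<le> opt_bandit_adap UNIV (HH d k) k"
  unfolding opt_bandit_adap_def
proof (rule INF_greatest)
  fix L
  let ?S = "(SUP A\<in>{(ax, ay). valid_adversary UNIV (HH d k) k L ax ay}.
        SUP T. \<integral>\<^sup>+ m. of_nat m \<partial>measure_pmf (play L (fst A) (snd A) T []))"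
  have A1: "ennreal (real k / 2) \<le> ?S"
  proof -
    have "ennreal (real k / 2) \<le> EE L (\<lambda>_. 0) (advy d k (\<lambda>_. 0)) k []" by (rule lower_k_final[OF k d])
    also have "\<dots> \<le> (SUP T. EE L (\<lambda>_. 0) (advy d k (\<lambda>_. 0)) T [])"
      by (rule SUP_upper[where i=k and A=UNIV and f="\<lambda>T. EE L (\<lambda>_. 0) (advy d k (\<lambda>_. 0)) T []"]) simp
    also have "\<dots> \<le> ?S"
    proof -
      have v: "((\<lambda>_. 0), advy d k (\<lambda>_. 0)) \<in> {(ax, ay). valid_adversary UNIV (HH d k) k L ax ay}"
        using advy_valid[of d k L "\<lambda>_. 0"] by simp
      from SUP_upper[OF v, of "\<lambda>A. (SUP T. EE L (fst A) (snd A) T [])"] show ?thesis by simp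
    qed
    finally show ?thesis .
  qed
  have A2: "ennreal (real d / 2) \<le> ?S"
  proof -
    have "ennreal (real d / 2) \<le> EE L length (advy d k length) d []" by (rule lower_d_final) (use k in simp)
    also have "\<dots> \<le> (SUP T. EE L length (advy d k length) T [])"
      by (rule SUP_upper[where i=d and A=UNIV and f="\<lambda>T. EE L length (advy d k length) T []"]) simp
    also have "\<dots> \<le> ?S"
    proof -
      have v: "(length, advy d k length) \<in> {(ax, ay). valid_adversary UNIV (HH d k) k L ax ay}"
        using advy_valid[of d k L length] by simp
      from SUP_upper[OF v, of "\<lambda>A. (SUP T. EE L (fst A) (snd A) T [])"] show ?thesis by simp
    qed
    finally show ?thesis .
  qed
  show "ennreal (1/4 * (real d + real k)) \<le> ?S"
  proof (cases "k \<le> d")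
    case True
    then have "real k \<le> real d" by simp
    then have "1/4 * (real d + real k) \<le> real d / 2" by simp
    then have "ennreal (1/4 * (real d + real k)) \<le> ennreal (real d / 2)" by (rule ennreal_leI)
    then show ?thesis using A2 by (rule order_trans)
  next
    case False
    then have "real d \<le> real k" by simp
    then have "1/4 * (real d + real k) \<le> real k / 2" by simp
    then have "ennreal (1/4 * (real d + real k)) \<le> ennreal (real k / 2)" by (rule ennreal_leI)
    then show ?thesis using A1 by (rule order_trans)
  qed
qed

theorem theorem7p1:
  shows "\<exists>c C :: real. 0 < c \<and> c \<le> C \<and>
    (\<forall>d k :: nat. d \<ge> 1 \<longrightarrow> k \<ge> 2 \<longrightarrow>
      (\<exists>(X :: nat set) (H :: (nat \<Rightarrow> nat) set).
         H \<noteq> {} \<and> (\<forall>h\<in>H. \<forall>x\<in>X. h x \<in> {0..k}) \<and>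
         opt_full_det X H = of_nat (d + 1) \<and>
         ennreal (c * real d * real k) \<le> opt_bandit_det X H \<and>
         opt_bandit_det X H \<le> ennreal (C * real d * real k) \<and>
         ennreal (c * (real d + real k)) \<le> opt_bandit_adap X H k \<and>
         opt_bandit_adap X H k \<le> ennreal (C * (real d + real k))))"
proof -
  have main: "\<forall>d k :: nat. d \<ge> 1 \<longrightarrow> k \<ge> 2 \<longrightarrow>
      (\<exists>(X :: nat set) (H :: (nat \<Rightarrow> nat) set).
         H \<noteq> {} \<and> (\<forall>h\<in>H. \<forall>x\<in>X. h x \<in> {0..k}) \<and>
         opt_full_det X H = of_nat (d + 1) \<and>
         ennreal (1/4 * real d * real k) \<le> opt_bandit_det X H \<and>
         opt_bandit_det X H \<le> ennreal (5 * real d * real k) \<and>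
         ennreal (1/4 * (real d + real k)) \<le> opt_bandit_adap X H k \<and>
         opt_bandit_adap X H k \<le> ennreal (5 * (real d + real k)))"
  proof (intro allI impI)
    fix d k :: nat assume d: "d \<ge> 1" and k: "k \<ge> 2"
    have k1: "1 \<le> k" using k by simp
    have "opt_bandit_adap UNIV (HH d k) k \<le> ennreal (real (5*d + 4*k))" by (rule adap_upper[OF k1])
    also have "\<dots> \<le> ennreal (5 * (real d + real k))" by (intro ennreal_leI) simp
    finally have au: "opt_bandit_adap UNIV (HH d k) k \<le> ennreal (5 * (real d + real k))" .
    have ne: "HH d k \<noteq> {}" using HH_ne[OF k1] by blast
    have vals: "\<forall>h\<in>HH d k. \<forall>x\<in>UNIV. h x \<in> {0..k}" using HH_le by auto
    show "\<exists>(X :: nat set) (H :: (nat \<Rightarrow> nat) set).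
         H \<noteq> {} \<and> (\<forall>h\<in>H. \<forall>x\<in>X. h x \<in> {0..k}) \<and>
         opt_full_det X H = of_nat (d + 1) \<and>
         ennreal (1/4 * real d * real k) \<le> opt_bandit_det X H \<and>
         opt_bandit_det X H \<le> ennreal (5 * real d * real k) \<and>
         ennreal (1/4 * (real d + real k)) \<le> opt_bandit_adap X H k \<and>
         opt_bandit_adap X H k \<le> ennreal (5 * (real d + real k))"
    proof (intro exI[of _ "UNIV :: nat set"] exI[of _ "HH d k"] conjI)
      show "HH d k \<noteq> {}" by (rule ne)
      show "\<forall>h\<in>HH d k. \<forall>x\<in>UNIV. h x \<in> {0..k}" by (rule vals)
      show "opt_full_det UNIV (HH d k) = of_nat (d + 1)" by (rule full_opt[OF k])
      show "ennreal (1/4 * real d * real k) \<le> opt_bandit_det UNIV (HH d k)" by (rule det_opt_lower[OF k1])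
      show "opt_bandit_det UNIV (HH d k) \<le> ennreal (5 * real d * real k)" by (rule det_opt_upper[OF d])
      show "ennreal (1/4 * (real d + real k)) \<le> opt_bandit_adap UNIV (HH d k) k" by (rule adap_lower[OF k d])
      show "opt_bandit_adap UNIV (HH d k) k \<le> ennreal (5 * (real d + real k))" by (rule au)
    qed
  qed
  have c1: "(0::real) < 1/4" by simp
  have c2: "(1/4::real) \<le> 5" by simp
  show ?thesis using c1 c2 main by blast
qed


end
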